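(* Let $(\rho,u,E,F_1,F_2)$ be an optimal quintuple on $[0,T]$ for the full Euler control problem, and assume that for every $a\in[0,T)$ there exists an admissible quintuple $(\tilde\rho,\tilde u,\tilde E,\tilde F_1,\tilde F_2)$ on $[a,T]$ with $(\tilde\rho,\tilde u,\tilde E)(a)=(\rho,u,E)(a)$, $\tilde F_1=-\lambda^{-1/2}(\tilde u-\bar v)$, $\tilde F_2=-\lambda^{-1/2}\big(2\tilde e+\tilde u\cdot(\tilde u-\bar v)\big)$, $\tilde e=\tilde E-\frac12|\tilde u|^2$. Then for all $0\le t_1\le t_2\le T$, $$\int_{\mathbb R^D}\rho(t_2)|u(t_2)-\bar v|^2+2\rho(t_2)e(t_2)\,dx\le C_\lambda\int_{\mathbb R^D}\rho(t_1)|u(t_1)-\bar v|^2+2\rho(t_1)e(t_1)\,dx,$$ where $C_\lambda=1+\lambda^{-1/2}$ if $\lambda\le1$ and $C_\lambda=1+\lambda^{1/2}$ if $\lambda>1$.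
   Context: Fix $D\ge1$, $T>0$, $\lambda>0$, $\bar v\in\mathbb R^D$, and an interaction kernel $\Psi:\mathbb R^D\times\mathbb R^D\to\mathbb R$ which is Lipschitz continuous, symmetric ($\Psi(x,y)=\Psi(y,x)$), nonnegative and bounded. For $0\le a<T$, an admissible quintuple on $[a,T]$ for the controlled full Euler system is $(\rho,u,E,F_1,F_2)$ with $\rho\in C^1([a,T]\times\mathbb R^D;[0,\infty))$, $u\in C^1([a,T]\times\mathbb R^D;\mathbb R^D)$, $E\in C^1([a,T]\times\mathbb R^D;\mathbb R)$, $F_1\in C([a,T]\times\mathbb R^D;\mathbb R^D)$, $F_2\in C([a,T]\times\mathbb R^D;\mathbb R)$, such that the internal energy $e:=E-\frac12|u|^2$ satisfies $e>0$ everywhere, there is a compact set $K\subset\mathbb R^D$ with $\operatorname{supp}\rho(t,\cdot)\subset K$ for all $t$, and, with pressure $p:=\frac{2}{D}\rho e$, the system $\partial_t\rho+\nabla_x\cdot(\rho u)=0$, $\partial_t(\rho u)+\nabla_x\cdot(\rho u\otimes u+pI)=Q_1+\rho F_1$, $\partial_t(\rho E)+\nabla_x\cdot(\rho Eu+pu)=Q_2+\rho F_2$ holds classically, where $Q_1(t,x)=\int\Psi(x,y)\rho(t,x)\rho(t,y)\big(u(t,y)-u(t,x)\big)dy$ and $Q_2(t,x)=\int\Psi(x,y)\rho(t,x)\rho(t,y)\big(u(t,x)\cdot u(t,y)-E(t,x)-E(t,y)\big)dy$. Define $G(F_1,F_2)=\rho|F_1|^2+\frac{\rho}{2e}|F_2-u\cdot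 F_1|^2$ and the cost on $[a,T]$, $J^{[a,T]}_{H_2}=\int_a^T\int_{\mathbb R^D}\rho|u-\bar v|^2+2\rho e+\lambda G(F_1,F_2)\,dx\,dt$. An admissible quintuple on $[0,T]$ is optimal if for every $a\in[0,T)$ its restriction to $[a,T]$ minimizes $J^{[a,T]}_{H_2}$ among all admissible quintuples on $[a,T]$ with the same values of $(\rho,u,E)$ at time $a$. *)

theory Defs
  imports "HOL-Analysis.Analysis"
begin

text \<open>Positions live in an abstract Euclidean space 'a, so D = DIM('a) (automatically at least 1).
Fields are curried functions of time and position.\<close>

definition C1_on :: "real \<Rightarrow> real \<Rightarrow> (real \<Rightarrow> 'a::euclidean_space \<Rightarrow> 'b::real_normed_vector) \<Rightarrow> bool" where
  "C1_on a T f \<longleftrightarrow>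
     (\<exists>ft fx. (\<forall>t\<in>{a..T}. \<forall>x.
         ((\<lambda>p. f (fst p) (snd p)) has_derivative (\<lambda>h. fst h *\<^sub>R ft t x + fx t x (snd h)))
           (at (t, x) within {a..T} \<times> UNIV))
       \<and> continuous_on ({a..T} \<times> UNIV) (\<lambda>p. ft (fst p) (snd p))
       \<and> (\<forall>i\<in>Basis. continuous_on ({a..T} \<times> UNIV) (\<lambda>p. fx (fst p) (snd p) i)))"

definition C0_on :: "real \<Rightarrow> real \<Rightarrow> (real \<Rightarrow> 'a::euclidean_space \<Rightarrow> 'b::real_normed_vector) \<Rightarrow> bool" where
  "C0_on a T f \<longleftrightarrow> continuous_on ({a..T} \<times> UNIV) (\<lambda>p. f (fst p) (snd p))"

definition pdt :: "real \<Rightarrow> real \<Rightarrow> (real \<Rightarrow> 'a::euclidean_space \<Rightarrow> 'b::real_normed_vector) \<Rightarrow> real \<Rightarrow> 'a \<Rightarrow> 'b" where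
  "pdt a T f t x = vector_derivative (\<lambda>s. f s x) (at t within {a..T})"

definition pdx :: "'a::euclidean_space \<Rightarrow> ('a \<Rightarrow> 'b::real_normed_vector) \<Rightarrow> 'a \<Rightarrow> 'b" where
  "pdx i g x = vector_derivative (\<lambda>h. g (x + h *\<^sub>R i)) (at 0)"

definition ie :: "(real \<Rightarrow> 'a::euclidean_space \<Rightarrow> 'a) \<Rightarrow> (real \<Rightarrow> 'a \<Rightarrow> real) \<Rightarrow> real \<Rightarrow> 'a \<Rightarrow> real" where
  "ie u E t x = E t x - (norm (u t x))\<^sup>2 / 2"

definition prs :: "(real \<Rightarrow> 'a::euclidean_space \<Rightarrow> real) \<Rightarrow> (real \<Rightarrow> 'a \<Rightarrow> 'a) \<Rightarrow> (real \<Rightarrow> 'a \<Rightarrow> real) \<Rightarrow> real \<Rightarrow> 'a \<Rightarrow> real" where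
  "prs \<rho> u E t x = 2 / real DIM('a) * \<rho> t x * ie u E t x"

definition Q1 :: "('a::euclidean_space \<Rightarrow> 'a \<Rightarrow> real) \<Rightarrow> (real \<Rightarrow> 'a \<Rightarrow> real) \<Rightarrow> (real \<Rightarrow> 'a \<Rightarrow> 'a) \<Rightarrow> real \<Rightarrow> 'a \<Rightarrow> 'a" where
  "Q1 \<Psi> \<rho> u t x = (\<integral>y. (\<Psi> x y * \<rho> t x * \<rho> t y) *\<^sub>R (u t y - u t x) \<partial>lborel)"

definition Q2 :: "('a::euclidean_space \<Rightarrow> 'a \<Rightarrow> real) \<Rightarrow> (real \<Rightarrow> 'a \<Rightarrow> real) \<Rightarrow> (real \<Rightarrow> 'a \<Rightarrow> 'a) \<Rightarrow> (real \<Rightarrow> 'a \<Rightarrow> real) \<Rightarrow> real \<Rightarrow> 'a \<Rightarrow> real" where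
  "Q2 \<Psi> \<rho> u E t x = (\<integral>y. \<Psi> x y * \<rho> t x * \<rho> t y * (u t x \<bullet> u t y - E t x - E t y) \<partial>lborel)"

definition admissible ::
  "('a::euclidean_space \<Rightarrow> 'a \<Rightarrow> real) \<Rightarrow> real \<Rightarrow> real \<Rightarrow> (real \<Rightarrow> 'a \<Rightarrow> real) \<Rightarrow> (real \<Rightarrow> 'a \<Rightarrow> 'a)
    \<Rightarrow> (real \<Rightarrow> 'a \<Rightarrow> real) \<Rightarrow> (real \<Rightarrow> 'a \<Rightarrow> 'a) \<Rightarrow> (real \<Rightarrow> 'a \<Rightarrow> real) \<Rightarrow> bool" where
  "admissible \<Psi> a T \<rho> u E F1 F2 \<longleftrightarrow>
     C1_on a T \<rho> \<and> C1_on a T u \<and> C1_on a T E \<and> C0_on a T F1 \<and> C0_on a T F2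
   \<and> (\<forall>t\<in>{a..T}. \<forall>x. 0 \<le> \<rho> t x)
   \<and> (\<forall>t\<in>{a..T}. \<forall>x. 0 < ie u E t x)
   \<and> (\<exists>K. compact K \<and> (\<forall>t\<in>{a..T}. closure {x. \<rho> t x \<noteq> 0} \<subseteq> K))
   \<and> (\<forall>t\<in>{a..T}. \<forall>x.
        pdt a T \<rho> t x + (\<Sum>i\<in>Basis. pdx i (\<lambda>y. \<rho> t y * (u t y \<bullet> i)) x) = 0
      \<and> pdt a T (\<lambda>s y. \<rho> s y *\<^sub>R u s y) t x
          + (\<Sum>i\<in>Basis. pdx i (\<lambda>y. (\<rho> t y * (u t y \<bullet> i)) *\<^sub>R u t y + prs \<rho> u E t y *\<^sub>R i) x)
        = Q1 \<Psi> \<rho> u t x + \<rho> t x *\<^sub>R F1 t x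
      \<and> pdt a T (\<lambda>s y. \<rho> s y * E s y) t x
          + (\<Sum>i\<in>Basis. pdx i (\<lambda>y. (\<rho> t y * E t y + prs \<rho> u E t y) * (u t y \<bullet> i)) x)
        = Q2 \<Psi> \<rho> u E t x + \<rho> t x * F2 t x)"

definition Gc :: "(real \<Rightarrow> 'a::euclidean_space \<Rightarrow> real) \<Rightarrow> (real \<Rightarrow> 'a \<Rightarrow> 'a) \<Rightarrow> (real \<Rightarrow> 'a \<Rightarrow> real)
    \<Rightarrow> (real \<Rightarrow> 'a \<Rightarrow> 'a) \<Rightarrow> (real \<Rightarrow> 'a \<Rightarrow> real) \<Rightarrow> real \<Rightarrow> 'a \<Rightarrow> real" where
  "Gc \<rho> u E F1 F2 t x = \<rho> t x * (norm (F1 t x))\<^sup>2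
      + \<rho> t x / (2 * ie u E t x) * (F2 t x - u t x \<bullet> F1 t x)\<^sup>2"

definition cost :: "real \<Rightarrow> 'a::euclidean_space \<Rightarrow> real \<Rightarrow> real \<Rightarrow> (real \<Rightarrow> 'a \<Rightarrow> real) \<Rightarrow> (real \<Rightarrow> 'a \<Rightarrow> 'a)
    \<Rightarrow> (real \<Rightarrow> 'a \<Rightarrow> real) \<Rightarrow> (real \<Rightarrow> 'a \<Rightarrow> 'a) \<Rightarrow> (real \<Rightarrow> 'a \<Rightarrow> real) \<Rightarrow> real" where
  "cost lam vbar a T \<rho> u E F1 F2 =
     (LINT t:{a..T}|lborel. (\<integral>x. \<rho> t x * (norm (u t x - vbar))\<^sup>2 + 2 * \<rho> t x * ie u E t x
                                  + lam * Gc \<rho> u E F1 F2 t x \<partial>lborel))"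

definition optimal ::
  "('a::euclidean_space \<Rightarrow> 'a \<Rightarrow> real) \<Rightarrow> real \<Rightarrow> 'a \<Rightarrow> real \<Rightarrow> (real \<Rightarrow> 'a \<Rightarrow> real) \<Rightarrow> (real \<Rightarrow> 'a \<Rightarrow> 'a)
    \<Rightarrow> (real \<Rightarrow> 'a \<Rightarrow> real) \<Rightarrow> (real \<Rightarrow> 'a \<Rightarrow> 'a) \<Rightarrow> (real \<Rightarrow> 'a \<Rightarrow> real) \<Rightarrow> bool" where
  "optimal \<Psi> lam vbar T \<rho> u E F1 F2 \<longleftrightarrow>
     admissible \<Psi> 0 T \<rho> u E F1 F2 \<and>
     (\<forall>a\<in>{0..<T}. \<forall>\<rho>' u' E' F1' F2'.
        admissible \<Psi> a T \<rho>' u' E' F1' F2'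
        \<and> (\<forall>x. \<rho>' a x = \<rho> a x \<and> u' a x = u a x \<and> E' a x = E a x)
        \<longrightarrow> cost lam vbar a T \<rho> u E F1 F2 \<le> cost lam vbar a T \<rho>' u' E' F1' F2')"

definition energy :: "'a::euclidean_space \<Rightarrow> (real \<Rightarrow> 'a \<Rightarrow> real) \<Rightarrow> (real \<Rightarrow> 'a \<Rightarrow> 'a) \<Rightarrow> (real \<Rightarrow> 'a \<Rightarrow> real) \<Rightarrow> real \<Rightarrow> real" where
  "energy vbar \<rho> u E t = (\<integral>x. \<rho> t x * (norm (u t x - vbar))\<^sup>2 + 2 * \<rho> t x * ie u E t x \<partial>lborel)"

end

theory Submission
  imports Defs
begin

lemma intg_cs:
  fixes f :: "'a::euclidean_space \<Rightarrow> 'b::{banach, second_countable_topology}"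
  assumes "continuous_on UNIV f" "compact K" "\<And>x. x \<notin> K \<Longrightarrow> f x = 0"
  shows "integrable lborel f"
proof -
  have "integrable lborel (\<lambda>x. indicator K x *\<^sub>R f x)"
    using assms by (intro borel_integrable_compact) (auto intro: continuous_on_subset)
  moreover have "(\<lambda>x. indicator K x *\<^sub>R f x) = f"
    using assms(3) by (auto simp: indicator_def fun_eq_iff)
  ultimately show ?thesis by simp
qed

lemma lint_box:
  fixes f :: "'a::euclidean_space \<Rightarrow> 'b::euclidean_space"
  assumes "continuous_on UNIV f" "compact K" "\<And>x. x \<notin> K \<Longrightarrow> f x = 0" "K \<subseteq> cbox a b"
  shows "integral\<^sup>L lborel f = integral (cbox a b) f"
proof -
  have "integral\<^sup>L lborel f = integral UNIV f"
    using integral_lborel[OF intg_cs[OF assms(1-3)]] by simp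
  also have "integral UNIV f = integral UNIV (\<lambda>x. if x \<in> cbox a b then f x else 0)"
    using assms(3,4) by (intro arg_cong[where f="integral UNIV"]) (auto simp: fun_eq_iff)
  also have "\<dots> = integral (cbox a b) f"
    by (rule integral_restrict_UNIV)
  finally show ?thesis .
qed

definition smf :: "real \<Rightarrow> real \<Rightarrow> (real \<Rightarrow> 'a::euclidean_space \<Rightarrow> 'b::real_normed_vector)
   \<Rightarrow> (real \<Rightarrow> 'a \<Rightarrow> 'b) \<Rightarrow> (real \<Rightarrow> 'a \<Rightarrow> 'a \<Rightarrow> 'b) \<Rightarrow> bool" where
  "smf a T f ft fx \<longleftrightarrow>
    (\<forall>t\<in>{a..T}. \<forall>x. ((\<lambda>s. f s x) has_vector_derivative ft t x) (at t within {a..T})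
         \<and> (f t has_derivative fx t x) (at x))
    \<and> continuous_on ({a..T} \<times> UNIV) (\<lambda>p. f (fst p) (snd p))
    \<and> continuous_on ({a..T} \<times> UNIV) (\<lambda>p. ft (fst p) (snd p))
    \<and> (\<forall>v. continuous_on ({a..T} \<times> UNIV) (\<lambda>p. fx (fst p) (snd p) v))"

lemma C1_smf:
  assumes "C1_on a T f"
  shows "\<exists>ft fx. smf a T f ft fx"
proof -
  obtain ft fx where D: "\<And>t x. t\<in>{a..T} \<Longrightarrow>
         ((\<lambda>p. f (fst p) (snd p)) has_derivative (\<lambda>h. fst h *\<^sub>R ft t x + fx t x (snd h)))
           (at (t, x) within {a..T} \<times> UNIV)"
    and c1: "continuous_on ({a..T} \<times> UNIV) (\<lambda>p. ft (fst p) (snd p))"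
    and c2: "\<And>i. i\<in>Basis \<Longrightarrow> continuous_on ({a..T} \<times> UNIV) (\<lambda>p. fx (fst p) (snd p) i)"
    using assms unfolding C1_on_def by blast
  have lin: "linear (fx t x)" if "t \<in> {a..T}" for t x
  proof -
    have "linear (\<lambda>h. fst h *\<^sub>R ft t x + fx t x (snd h))"
      using D[OF that] has_derivative_linear by blast
    note L = this
    show ?thesis
    proof (rule linearI)
      fix v w show "fx t x (v + w) = fx t x v + fx t x w"
        using linear_add[OF L, of "(0,v)" "(0,w)"] by simp
    next
      fix c v show "fx t x (c *\<^sub>R v) = c *\<^sub>R fx t x v"
        using linear_scale[OF L, of c "(0,v)"] by simp
    qed
  qed
  have DD: "\<And>p. p \<in> {a..T} \<times> UNIV \<Longrightarrow> ((\<lambda>p. f (fst p) (snd p)) has_derivative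
      (\<lambda>h. fst h *\<^sub>R ft (fst p) (snd p) + fx (fst p) (snd p) (snd h))) (at p within {a..T} \<times> UNIV)"
  proof -
    fix p :: "real \<times> 'a" assume "p \<in> {a..T} \<times> UNIV"
    then have "fst p \<in> {a..T}" by (simp add: mem_Times_iff)
    from D[OF this, of "snd p"] show "((\<lambda>p. f (fst p) (snd p)) has_derivative
      (\<lambda>h. fst h *\<^sub>R ft (fst p) (snd p) + fx (fst p) (snd p) (snd h))) (at p within {a..T} \<times> UNIV)"
      by simp
  qed
  have tder: "((\<lambda>s. f s x) has_vector_derivative ft t x) (at t within {a..T})" if "t \<in> {a..T}" for t x
  proof -
    have *: "((\<lambda>s. (s, x)) has_derivative (\<lambda>y. (y, 0))) (at t within {a..T})"
      by (auto intro!: derivative_eq_intros)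
    have s: "(\<lambda>s. (s, x)) ` {a..T} \<subseteq> {a..T} \<times> (UNIV::'a set)" by auto
    from has_derivative_in_compose2[OF DD s that *]
    have "((\<lambda>s. f s x) has_derivative (\<lambda>y. y *\<^sub>R ft t x + fx t x 0)) (at t within {a..T})"
      by simp
    then show ?thesis unfolding has_vector_derivative_def
      using linear_0[OF lin[OF that]] by simp
  qed
  have xder: "(f t has_derivative fx t x) (at x)" if "t \<in> {a..T}" for t x
  proof -
    have r: "(\<lambda>y. (t, y)) ` UNIV \<subseteq> {a..T} \<times> (UNIV::'a set)" using that by auto
    have *: "((\<lambda>y. (t, y)) has_derivative (\<lambda>y. (0, y))) (at x within UNIV)"
      by (auto intro!: derivative_eq_intros)
    have "((\<lambda>y. f t y) has_derivative (\<lambda>y. 0 *\<^sub>R ft t x + fx t x y)) (at x within UNIV)"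
      using has_derivative_in_compose2[OF DD r _ *] by simp
    then show ?thesis by simp
  qed
  have cf: "continuous_on ({a..T} \<times> UNIV) (\<lambda>p. f (fst p) (snd p))"
    unfolding continuous_on_eq_continuous_within
  proof
    fix p assume "p \<in> {a..T} \<times> (UNIV::'a set)"
    then show "continuous (at p within {a..T} \<times> UNIV) (\<lambda>p. f (fst p) (snd p))"
      using has_derivative_continuous[OF DD] by blast
  qed
  have cx: "continuous_on ({a..T} \<times> UNIV) (\<lambda>p. fx (fst p) (snd p) v)" for v
  proof -
    have "continuous_on ({a..T} \<times> UNIV) (\<lambda>p. \<Sum>i\<in>Basis. (v \<bullet> i) *\<^sub>R fx (fst p) (snd p) i)"
      using c2 by (intro continuous_intros) auto
    moreover have "(\<Sum>i\<in>Basis. (v \<bullet> i) *\<^sub>R fx (fst p) (snd p) i) = fx (fst p) (snd p) v"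
      if "p \<in> {a..T} \<times> UNIV" for p
    proof -
      have "fx (fst p) (snd p) v = fx (fst p) (snd p) (\<Sum>i\<in>Basis. (v \<bullet> i) *\<^sub>R i)"
        by (simp add: euclidean_representation)
      also have "\<dots> = (\<Sum>i\<in>Basis. (v \<bullet> i) *\<^sub>R fx (fst p) (snd p) i)"
      proof -
        have L: "linear (fx (fst p) (snd p))" using lin that by (cases p) auto
        show ?thesis by (simp add: linear_sum[OF L] o_def linear_scale[OF L])
      qed
      finally show ?thesis by simp
    qed
    ultimately show ?thesis by (rule continuous_on_eq) simp
  qed
  show ?thesis unfolding smf_def using tder xder cf c1 cx by blast
qed

lemma smfD:
  assumes "smf a T f ft fx"
  shows "\<And>t x. t\<in>{a..T} \<Longrightarrow> ((\<lambda>s. f s x) has_vector_derivative ft t x) (at t within {a..T})"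
    "\<And>t x. t\<in>{a..T} \<Longrightarrow> (f t has_derivative fx t x) (at x)"
    "continuous_on ({a..T} \<times> UNIV) (\<lambda>p. f (fst p) (snd p))"
    "continuous_on ({a..T} \<times> UNIV) (\<lambda>p. ft (fst p) (snd p))"
    "\<And>v. continuous_on ({a..T} \<times> UNIV) (\<lambda>p. fx (fst p) (snd p) v)"
  using assms unfolding smf_def by auto

lemma smfI:
  assumes "\<And>t x. t\<in>{a..T} \<Longrightarrow> ((\<lambda>s. f s x) has_vector_derivative ft t x) (at t within {a..T})"
    "\<And>t x. t\<in>{a..T} \<Longrightarrow> (f t has_derivative fx t x) (at x)"
    "continuous_on ({a..T} \<times> UNIV) (\<lambda>p. f (fst p) (snd p))"
    "continuous_on ({a..T} \<times> UNIV) (\<lambda>p. ft (fst p) (snd p))"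
    "\<And>v. continuous_on ({a..T} \<times> UNIV) (\<lambda>p. fx (fst p) (snd p) v)"
  shows "smf a T f ft fx"
  using assms unfolding smf_def by auto

lemma smf_bil:
  fixes prod :: "'b::real_normed_vector \<Rightarrow> 'c::real_normed_vector \<Rightarrow> 'd::real_normed_vector"
    and f :: "real \<Rightarrow> 'a::euclidean_space \<Rightarrow> 'b" and g :: "real \<Rightarrow> 'a \<Rightarrow> 'c"
  assumes b: "bounded_bilinear prod" and f: "smf a T f ft fx" and g: "smf a T g gt gx"
  shows "smf a T (\<lambda>t x. prod (f t x) (g t x)) (\<lambda>t x. prod (f t x) (gt t x) + prod (ft t x) (g t x))
     (\<lambda>t x v. prod (f t x) (gx t x v) + prod (fx t x v) (g t x))"
proof (rule smfI)
  note F = smfD[OF f] and G = smfD[OF g]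
  fix t x assume t: "t \<in> {a..T}"
  show "((\<lambda>s. prod (f s x) (g s x)) has_vector_derivative prod (f t x) (gt t x) + prod (ft t x) (g t x)) (at t within {a..T})"
    by (rule bounded_bilinear.has_vector_derivative[OF b F(1)[OF t] G(1)[OF t]])
  show "((\<lambda>x. prod (f t x) (g t x)) has_derivative (\<lambda>v. prod (f t x) (gx t x v) + prod (fx t x v) (g t x))) (at x)"
    by (rule bounded_bilinear.FDERIV[OF b F(2)[OF t] G(2)[OF t]])
next
  note F = smfD[OF f] and G = smfD[OF g]
  show "continuous_on ({a..T} \<times> UNIV) (\<lambda>p. prod (f (fst p) (snd p)) (g (fst p) (snd p)))"
    by (rule bounded_bilinear.continuous_on[OF b F(3) G(3)])
  show "continuous_on ({a..T} \<times> UNIV) (\<lambda>p. prod (f (fst p) (snd p)) (gt (fst p) (snd p)) + prod (ft (fst p) (snd p)) (g (fst p) (snd p)))"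
    by (intro continuous_on_add bounded_bilinear.continuous_on[OF b] F G)
  fix v
  show "continuous_on ({a..T} \<times> UNIV) (\<lambda>p. prod (f (fst p) (snd p)) (gx (fst p) (snd p) v) + prod (fx (fst p) (snd p) v) (g (fst p) (snd p)))"
    by (intro continuous_on_add bounded_bilinear.continuous_on[OF b] F G)
qed

lemma smf_add:
  assumes f: "smf a T f ft fx" and g: "smf a T g gt gx"
  shows "smf a T (\<lambda>t x. f t x + g t x) (\<lambda>t x. ft t x + gt t x) (\<lambda>t x v. fx t x v + gx t x v)"
proof (rule smfI)
  note F = smfD[OF f] and G = smfD[OF g]
  fix t x assume t: "t \<in> {a..T}"
  show "((\<lambda>s. f s x + g s x) has_vector_derivative ft t x + gt t x) (at t within {a..T})"
    by (rule has_vector_derivative_add[OF F(1)[OF t] G(1)[OF t]])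
  show "((\<lambda>x. f t x + g t x) has_derivative (\<lambda>v. fx t x v + gx t x v)) (at x)"
    by (rule has_derivative_add[OF F(2)[OF t] G(2)[OF t]])
next
  note F = smfD[OF f] and G = smfD[OF g]
  show "continuous_on ({a..T} \<times> UNIV) (\<lambda>p. f (fst p) (snd p) + g (fst p) (snd p))"
    by (intro continuous_on_add F G)
  show "continuous_on ({a..T} \<times> UNIV) (\<lambda>p. ft (fst p) (snd p) + gt (fst p) (snd p))"
    by (intro continuous_on_add F G)
  fix v
  show "continuous_on ({a..T} \<times> UNIV) (\<lambda>p. fx (fst p) (snd p) v + gx (fst p) (snd p) v)"
    by (intro continuous_on_add F G)
qed

lemma smf_const: "smf a T (\<lambda>t x. c) (\<lambda>t x. 0) (\<lambda>t x v. 0)"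
  by (rule smfI) (auto intro: has_vector_derivative_const has_derivative_const continuous_on_const)

lemma smf_scale:
  assumes f: "smf a T f ft fx"
  shows "smf a T (\<lambda>t x. c *\<^sub>R f t x) (\<lambda>t x. c *\<^sub>R ft t x) (\<lambda>t x v. c *\<^sub>R fx t x v)"
  using smf_bil[OF bounded_bilinear_scaleR smf_const[of a T c] f] by simp

lemma smf_diff:
  assumes f: "smf a T f ft fx" and g: "smf a T g gt gx"
  shows "smf a T (\<lambda>t x. f t x - g t x) (\<lambda>t x. ft t x - gt t x) (\<lambda>t x v. fx t x v - gx t x v)"
  using smf_add[OF f smf_scale[OF g, of "-1"]] by simp

lemma smf_pdt:
  assumes f: "smf a T f ft fx" and "a < T" "t \<in> {a..T}"
  shows "pdt a T f t x = ft t x"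
proof -
  have "((\<lambda>s. f s x) has_vector_derivative ft t x) (at t within {a..T})"
    using smfD(1)[OF f assms(3)] .
  from vector_derivative_within_cbox[of a T t, unfolded cbox_interval, OF assms(2,3) this]
  show ?thesis unfolding pdt_def .
qed

lemma smf_pdx:
  assumes f: "smf a T f ft fx" and "t \<in> {a..T}"
  shows "pdx i (f t) x = fx t x i"
proof -
  have d: "(f t has_derivative fx t x) (at x)" using f assms unfolding smf_def by auto
  have L: "linear (fx t x)" using has_derivative_linear[OF d] .
  have "((\<lambda>h. x + h *\<^sub>R i) has_derivative (\<lambda>h. h *\<^sub>R i)) (at 0)"
    by (auto intro!: derivative_eq_intros)
  from has_derivative_compose[OF this] d
  have "((\<lambda>h. f t (x + h *\<^sub>R i)) has_derivative (\<lambda>h. fx t x (h *\<^sub>R i))) (at 0)" by simp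
  then have "((\<lambda>h. f t (x + h *\<^sub>R i)) has_vector_derivative fx t x i) (at 0)"
    unfolding has_vector_derivative_def by (simp add: linear_scale[OF L])
  then show ?thesis unfolding pdx_def by (rule vector_derivative_at)
qed

lemma smf_zero:
  assumes f: "smf a T f ft fx" and "a < T" "closed K"
    and z: "\<And>t x. t \<in> {a..T} \<Longrightarrow> x \<notin> K \<Longrightarrow> f t x = 0"
    and t: "t \<in> {a..T}" and x: "x \<notin> K"
  shows "ft t x = 0" "fx t x = (\<lambda>_. 0)"
proof -
  have A1: "((\<lambda>s. f s x) has_vector_derivative ft t x) (at t within cbox a T)"
    using smfD(1)[OF f t] by simp
  have A2: "((\<lambda>s. f s x) has_vector_derivative 0) (at t within cbox a T)"
    by (rule has_vector_derivative_transform[OF _ _ has_vector_derivative_const])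
      (use t z x in auto)
  have tt: "t \<in> cbox a T" using t by simp
  show "ft t x = 0"
    using vector_derivative_within_cbox[OF assms(2) tt A1] vector_derivative_within_cbox[OF assms(2) tt A2]
    by simp
  have d: "(f t has_derivative fx t x) (at x)" using smfD(2)[OF f t] .
  have "(f t has_derivative (\<lambda>_. 0)) (at x)"
    by (rule has_derivative_transform_within_open[OF has_derivative_const[of 0], of "- K"])
      (use assms in auto)
  then show "fx t x = (\<lambda>_. 0)" using has_derivative_unique[OF d] by blast
qed

lemma cont_slice:
  assumes "continuous_on ({a..T} \<times> UNIV) (\<lambda>p. f (fst p) (snd p))" "t \<in> {a..T}"
  shows "continuous_on UNIV (f t)"
proof -
  have "continuous_on UNIV (\<lambda>y. (\<lambda>p. f (fst p) (snd p)) (t, y))"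
    by (rule continuous_on_compose2[OF assms(1)]) (use assms(2) in \<open>auto intro!: continuous_intros\<close>)
  then show ?thesis by simp
qed

lemma lborel_shift:
  fixes g :: "'a::euclidean_space \<Rightarrow> real"
  assumes "continuous_on UNIV g"
  shows "(\<integral>x. g (x + c) \<partial>lborel) = integral\<^sup>L lborel g"
proof -
  have m: "(+) c \<in> lborel \<rightarrow>\<^sub>M borel"
    unfolding measurable_lborel2
    by (rule borel_measurable_continuous_onI) (rule continuous_on_add[OF continuous_on_const continuous_on_id])
  have g: "g \<in> borel_measurable borel"
    using assms by (rule borel_measurable_continuous_onI)
  have "integral\<^sup>L lborel g = integral\<^sup>L (distr lborel borel ((+) c)) g"
    by (simp add: lborel_distr_plus)
  also have "\<dots> = (\<integral>x. g (c + x) \<partial>lborel)"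
    by (rule integral_distr[OF m g])
  finally show ?thesis by (simp add: add.commute)
qed

lemma deriv_zero_outside:
  fixes g :: "'a::euclidean_space \<Rightarrow> 'b::real_normed_vector"
  assumes d: "(g has_derivative g') (at x)" and K: "closed K" and z: "\<And>x. x \<notin> K \<Longrightarrow> g x = 0"
    and x: "x \<notin> K"
  shows "g' = (\<lambda>_. 0)"
proof -
  have "(g has_derivative (\<lambda>_. 0)) (at x)"
    by (rule has_derivative_transform_within_open[OF has_derivative_const[of 0], of "- K"])
      (use assms in auto)
  then show ?thesis using has_derivative_unique[OF d] by blast
qed

lemma div_zero:
  fixes g :: "'a::euclidean_space \<Rightarrow> real"
  assumes d: "\<And>x. (g has_derivative g' x) (at x)"
    and c: "\<And>v. continuous_on UNIV (\<lambda>x. g' x v)"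
    and K: "compact K" and z: "\<And>x. x \<notin> K \<Longrightarrow> g x = 0"
  shows "integral\<^sup>L lborel (\<lambda>x. g' x i) = 0"
proof -
  have cg: "continuous_on UNIV g"
    unfolding continuous_on_eq_continuous_within
    using has_derivative_continuous[OF d] by (simp add: has_derivative_at_withinI)
  have g'z: "g' x = (\<lambda>_. 0)" if "x \<notin> K" for x
    using deriv_zero_outside[OF d compact_imp_closed[OF K] z that] .
  obtain R where R: "\<And>x. x \<in> K \<Longrightarrow> norm x \<le> R"
    using compact_imp_bounded[OF K] unfolding bounded_iff by auto
  define S where "S = cball (0::'a) (R + norm i)"
  have cS: "compact S" by (simp add: S_def)
  have "bounded S" by (simp add: S_def)
  then obtain cc where Sc: "S \<subseteq> cbox (-cc) cc" using bounded_subset_cbox_symmetric by blast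
  have KS: "K \<subseteq> S"
  proof
    fix x assume "x \<in> K"
    then have "norm x \<le> R" by (rule R)
    then show "x \<in> S" unfolding S_def mem_cball_0 using norm_ge_zero[of i] by linarith
  qed
  have shiftz: "g (x + s *\<^sub>R i) = 0" if "\<bar>s\<bar> < 1" "x \<notin> S" for s x
  proof (rule z, rule notI)
    assume "x + s *\<^sub>R i \<in> K"
    then have "norm (x + s *\<^sub>R i) \<le> R" by (rule R)
    moreover have "norm x \<le> norm (x + s *\<^sub>R i) + \<bar>s\<bar> * norm i"
      using norm_triangle_ineq4[of "x + s *\<^sub>R i" "s *\<^sub>R i"] by simp
    moreover have "\<bar>s\<bar> * norm i \<le> norm i"
      using that(1) by (simp add: mult_left_le_one_le)
    ultimately have "x \<in> S" by (simp add: S_def)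
    with that(2) show False by simp
  qed
  define U where "U = ball (0::real) 1"
  have U0: "0 \<in> U" by (simp add: U_def)
  define G where "G = (\<lambda>s. integral (cbox (-cc) cc) (\<lambda>x. g (x + s *\<^sub>R i)))"
  have cgs: "continuous_on UNIV (\<lambda>x. g (x + s *\<^sub>R i))" for s
    by (rule continuous_on_compose2[OF cg]) (auto intro!: continuous_intros)
  have Gc: "G s = integral\<^sup>L lborel g" if sU: "s \<in> U" for s
  proof -
    have s1: "\<bar>s\<bar> < 1" using sU by (simp add: U_def)
    have z2: "\<And>x. x \<notin> S \<Longrightarrow> g (x + s *\<^sub>R i) = 0" using shiftz[OF s1] .
    have "G s = (\<integral>x. g (x + s *\<^sub>R i) \<partial>lborel)"
      unfolding G_def using lint_box[OF cgs cS z2 Sc] by simp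
    also have "\<dots> = integral\<^sup>L lborel g" by (rule lborel_shift[OF cg])
    finally show ?thesis .
  qed
  have lin: "linear (g' y)" for y using has_derivative_linear[OF d] .
  have hd: "((\<lambda>s. g (x + s *\<^sub>R i)) has_vector_derivative g' (x + s *\<^sub>R i) i) (at s within U)" for s x
  proof -
    have "((\<lambda>s. x + s *\<^sub>R i) has_derivative (\<lambda>h. h *\<^sub>R i)) (at s within U)"
      by (auto intro!: derivative_eq_intros)
    from has_derivative_compose[OF this d]
    have "((\<lambda>s. g (x + s *\<^sub>R i)) has_derivative (\<lambda>h. g' (x + s *\<^sub>R i) (h *\<^sub>R i))) (at s within U)" .
    then show ?thesis
      unfolding has_vector_derivative_def by (simp add: linear_scale[OF lin])
  qed
  have intg: "(\<lambda>x. g (x + s *\<^sub>R i)) integrable_on cbox (- cc) cc" for s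
    by (rule integrable_continuous) (rule continuous_on_subset[OF cgs], simp)
  have cd: "continuous_on (U \<times> cbox (- cc) cc) (\<lambda>(s, x). g' (x + s *\<^sub>R i) i)"
  proof -
    have "continuous_on UNIV (\<lambda>p::real \<times> 'a. g' (snd p + fst p *\<^sub>R i) i)"
      by (rule continuous_on_compose2[OF c]) (auto intro!: continuous_intros)
    then show ?thesis
      unfolding split_beta' by (rule continuous_on_subset) simp
  qed
  have cU: "convex U" by (simp add: U_def)
  have D1: "(G has_vector_derivative integral (cbox (-cc) cc) (\<lambda>x. g' (x + 0 *\<^sub>R i) i)) (at 0 within U)"
    unfolding G_def
  proof (rule leibniz_rule_vector_derivative[where f="\<lambda>s x. g (x + s *\<^sub>R i)" and fx="\<lambda>s x. g' (x + s *\<^sub>R i) i"])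
    fix s x show "((\<lambda>s. g (x + s *\<^sub>R i)) has_vector_derivative g' (x + s *\<^sub>R i) i) (at s within U)"
      by (rule hd)
  next
    fix s show "(\<lambda>x. g (x + s *\<^sub>R i)) integrable_on cbox (- cc) cc" by (rule intg)
  next
    show "continuous_on (U \<times> cbox (- cc) cc) (\<lambda>(s, x). g' (x + s *\<^sub>R i) i)" by (rule cd)
  next
    show "0 \<in> U" by (rule U0)
  next
    show "convex U" by (rule cU)
  qed
  have D2: "(G has_vector_derivative 0) (at 0 within U)"
    by (rule has_vector_derivative_transform[OF _ _ has_vector_derivative_const[of "integral\<^sup>L lborel g"]])
      (use Gc U0 in auto)
  have oU: "at (0::real) within U = at 0" by (rule at_within_open) (auto simp: U_def)
  have "integral (cbox (-cc) cc) (\<lambda>x. g' x i) = 0"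
    using vector_derivative_unique_at[OF D1[unfolded oU] D2[unfolded oU]] by simp
  moreover have "integral\<^sup>L lborel (\<lambda>x. g' x i) = integral (cbox (-cc) cc) (\<lambda>x. g' x i)"
    by (rule lint_box[OF c K _ order.trans[OF KS Sc]]) (simp add: g'z)
  ultimately show ?thesis by simp
qed

lemma Q1_int_zero:
  fixes \<Psi> :: "'a::euclidean_space \<Rightarrow> 'a \<Rightarrow> real" and r :: "'a \<Rightarrow> real" and w :: "'a \<Rightarrow> 'a"
  assumes cP: "continuous_on UNIV (\<lambda>p. \<Psi> (fst p) (snd p))" and cr: "continuous_on UNIV r"
    and cw: "continuous_on UNIV w" and K: "compact K" and z: "\<And>x. x \<notin> K \<Longrightarrow> r x = 0"
    and sym: "\<And>x y. \<Psi> x y = \<Psi> y x"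
  shows "(\<integral>x. (\<integral>y. \<Psi> x y * r x * r y * (vb \<bullet> (w y - w x)) \<partial>lborel) \<partial>lborel) = 0"
proof -
  define k where "k x y = \<Psi> x y * r x * r y * (vb \<bullet> (w y - w x))" for x y
  have c1: "continuous_on UNIV (\<lambda>p::'a\<times>'a. r (fst p))"
    by (rule continuous_on_compose2[OF cr]) (auto intro!: continuous_intros)
  have c2: "continuous_on UNIV (\<lambda>p::'a\<times>'a. r (snd p))"
    by (rule continuous_on_compose2[OF cr]) (auto intro!: continuous_intros)
  have c3: "continuous_on UNIV (\<lambda>p::'a\<times>'a. w (fst p))"
    by (rule continuous_on_compose2[OF cw]) (auto intro!: continuous_intros)
  have c4: "continuous_on UNIV (\<lambda>p::'a\<times>'a. w (snd p))"
    by (rule continuous_on_compose2[OF cw]) (auto intro!: continuous_intros)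
  have ck: "continuous_on UNIV (\<lambda>p. k (fst p) (snd p))"
    unfolding k_def by (intro continuous_intros cP c1 c2 c3 c4)
  have "integrable lborel (\<lambda>p. k (fst p) (snd p))"
    by (rule intg_cs[OF ck compact_Times[OF K K]]) (auto simp: k_def z mem_Times_iff)
  then have int: "integrable (lborel \<Otimes>\<^sub>M lborel) (\<lambda>(x, y). k x y)"
    by (simp add: lborel_prod split_beta')
  have "(\<integral>x. (\<integral>y. k x y \<partial>lborel) \<partial>lborel) = (\<integral>y. (\<integral>x. k x y \<partial>lborel) \<partial>lborel)"
    using lborel_pair.Fubini_integral[OF int] by simp
  also have "\<dots> = (\<integral>y. (\<integral>x. - k y x \<partial>lborel) \<partial>lborel)"
    by (simp add: k_def sym algebra_simps inner_diff_right)
  also have "\<dots> = - (\<integral>y. (\<integral>x. k y x \<partial>lborel) \<partial>lborel)"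
    by simp
  finally have "(\<integral>x. (\<integral>y. k x y \<partial>lborel) \<partial>lborel) = 0" by simp
  then show ?thesis by (simp add: k_def)
qed

lemma smf_cong:
  assumes f: "smf a T f ft fx" and e1: "\<And>t x. t\<in>{a..T} \<Longrightarrow> ft' t x = ft t x"
    and e2: "\<And>t x. t \<in> {a..T} \<Longrightarrow> fx' t x = fx t x"
  shows "smf a T f ft' fx'"
proof (rule smfI)
  note F = smfD[OF f]
  fix t x assume t: "t\<in>{a..T}"
  show "((\<lambda>s. f s x) has_vector_derivative ft' t x) (at t within {a..T})"
    using F(1)[OF t] e1[OF t] by simp
  show "(f t has_derivative fx' t x) (at x)" using F(2)[OF t] e2[OF t] by simp
next
  note F = smfD[OF f]
  show "continuous_on ({a..T}\<times>UNIV) (\<lambda>p. f (fst p) (snd p))" by (rule F(3))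
  show "continuous_on ({a..T}\<times>UNIV) (\<lambda>p. ft' (fst p) (snd p))"
    by (rule continuous_on_eq[OF F(4)]) (auto simp: e1 mem_Times_iff)
  fix v show "continuous_on ({a..T}\<times>UNIV) (\<lambda>p. fx' (fst p) (snd p) v)"
    by (rule continuous_on_eq[OF F(5)[of v]]) (auto simp: e2 mem_Times_iff)
qed

definition Sm :: "real \<Rightarrow> real \<Rightarrow> (real \<Rightarrow> 'a::euclidean_space \<Rightarrow> 'b::real_normed_vector) \<Rightarrow> bool" where
  "Sm a T f \<longleftrightarrow> smf a T f (pdt a T f) (\<lambda>t x v. pdx v (f t) x)"

lemma Sm_I:
  assumes f: "smf a T f ft fx" and aT: "a < T"
  shows "Sm a T f"
  unfolding Sm_def
proof (rule smf_cong[OF f])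
  fix t x assume t: "t \<in> {a..T}"
  show "pdt a T f t x = ft t x" by (rule smf_pdt[OF f aT t])
  show "(\<lambda>v. pdx v (f t) x) = fx t x" by (rule ext) (rule smf_pdx[OF f t])
qed

lemma Sm_bil:
  fixes prod :: "'b::real_normed_vector \<Rightarrow> 'c::real_normed_vector \<Rightarrow> 'd::real_normed_vector"
    and f :: "real \<Rightarrow> 'a::euclidean_space \<Rightarrow> 'b" and g :: "real \<Rightarrow> 'a \<Rightarrow> 'c"
  assumes b: "bounded_bilinear prod" and f: "Sm a T f" and g: "Sm a T g" and aT: "a < T"
  shows "Sm a T (\<lambda>t x. prod (f t x) (g t x))"
  by (rule Sm_I[OF smf_bil[OF b f[unfolded Sm_def] g[unfolded Sm_def]] aT])

lemma Sm_add:
  assumes f: "Sm a T f" and g: "Sm a T g" and aT: "a < T"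
  shows "Sm a T (\<lambda>t x. f t x + g t x)"
  by (rule Sm_I[OF smf_add[OF f[unfolded Sm_def] g[unfolded Sm_def]] aT])

lemma Sm_diff:
  assumes f: "Sm a T f" and g: "Sm a T g" and aT: "a < T"
  shows "Sm a T (\<lambda>t x. f t x - g t x)"
  by (rule Sm_I[OF smf_diff[OF f[unfolded Sm_def] g[unfolded Sm_def]] aT])

lemma Sm_const:
  assumes aT: "a < T"
  shows "Sm a T (\<lambda>t x. c)"
  by (rule Sm_I[OF smf_const aT])

lemma Sm_C1:
  assumes "C1_on a T f" "a < T"
  shows "Sm a T f"
  using C1_smf[OF assms(1)] Sm_I[OF _ assms(2)] by blast

lemma smf_comb:
  fixes vb :: "'a::euclidean_space" and A C :: "real \<Rightarrow> 'a \<Rightarrow> real" and B :: "real \<Rightarrow> 'a \<Rightarrow> 'a"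
  assumes A: "smf a T A At Ax" and B: "smf a T B Bt Bx" and C: "smf a T C Ct Cx"
  shows "smf a T (\<lambda>s y. 2 * A s y - 2 * (vb \<bullet> B s y) + (vb \<bullet> vb) * C s y)
     (\<lambda>s y. 2 * At s y - 2 * (vb \<bullet> Bt s y) + (vb \<bullet> vb) * Ct s y)
     (\<lambda>s y v. 2 * Ax s y v - 2 * (vb \<bullet> Bx s y v) + (vb \<bullet> vb) * Cx s y v)"
proof -
  have B': "smf a T (\<lambda>s y. vb \<bullet> B s y) (\<lambda>s y. vb \<bullet> Bt s y) (\<lambda>s y v. vb \<bullet> Bx s y v)"
    using smf_bil[OF bounded_bilinear_inner smf_const[of a T vb] B] by simp
  show ?thesis
    using smf_add[OF smf_diff[OF smf_scale[OF A, of 2] smf_scale[OF B', of 2]] smf_scale[OF C, of "vb \<bullet> vb"]]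
    by (simp add: real_scaleR_def)
qed

lemma Sm_props:
  assumes f: "Sm a T f" and aT: "a < T" and K: "compact K"
    and z: "\<And>s y. s \<in> {a..T} \<Longrightarrow> y \<notin> K \<Longrightarrow> f s y = 0" and t: "t \<in> {a..T}"
  shows "continuous_on UNIV (f t)" "continuous_on UNIV (pdt a T f t)"
    "\<And>v. continuous_on UNIV (\<lambda>y. pdx v (f t) y)"
    "\<And>y. y \<notin> K \<Longrightarrow> pdt a T f t y = 0" "\<And>y v. y \<notin> K \<Longrightarrow> pdx v (f t) y = 0"
proof -
  note F = smfD[OF f[unfolded Sm_def]]
  show "continuous_on UNIV (f t)" by (rule cont_slice[OF F(3) t])
  show "continuous_on UNIV (pdt a T f t)" by (rule cont_slice[OF F(4) t])
  fix v show "continuous_on UNIV (\<lambda>y. pdx v (f t) y)"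
    using cont_slice[OF F(5)[of v] t] by simp
next
  fix y assume y: "y \<notin> K"
  show "pdt a T f t y = 0"
    by (rule smf_zero(1)[OF f[unfolded Sm_def] aT compact_imp_closed[OF K] z t y])
  fix v show "pdx v (f t) y = 0"
    using fun_cong[OF smf_zero(2)[OF f[unfolded Sm_def] aT compact_imp_closed[OF K] z t y], of v] by simp
qed

definition wf :: "'a::euclidean_space \<Rightarrow> (real \<Rightarrow> 'a \<Rightarrow> real) \<Rightarrow> (real \<Rightarrow> 'a \<Rightarrow> 'a) \<Rightarrow> (real \<Rightarrow> 'a \<Rightarrow> real) \<Rightarrow> real \<Rightarrow> 'a \<Rightarrow> real" where
  "wf vb \<rho> u E s y = 2 * (\<rho> s y * E s y) - 2 * (vb \<bullet> (\<rho> s y *\<^sub>R u s y)) + (vb \<bullet> vb) * \<rho> s y"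

lemma energy_integrand:
  "\<rho> t x * (norm (u t x - vb))\<^sup>2 + 2 * \<rho> t x * ie u E t x = wf vb \<rho> u E t x"
  unfolding wf_def ie_def
  by (simp add: power2_norm_eq_inner inner_diff_left inner_diff_right inner_commute algebra_simps)

lemma Q2_nonpos:
  fixes \<Psi> :: "'a::euclidean_space \<Rightarrow> 'a \<Rightarrow> real"
  assumes nn: "\<And>x y. 0 \<le> \<Psi> x y" and pos: "\<And>y. 0 \<le> \<rho> t y" and iep: "\<And>y. 0 < ie u E t y"
  shows "Q2 \<Psi> \<rho> u E t x \<le> 0"
proof -
  have "0 \<le> (\<integral>y. - (\<Psi> x y * \<rho> t x * \<rho> t y * (u t x \<bullet> u t y - E t x - E t y)) \<partial>lborel)"
  proof (rule integral_nonneg_AE, rule AE_I2)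
    fix y
    have e: "E t z = ie u E t z + (u t z \<bullet> u t z) / 2" for z
      by (simp add: ie_def power2_norm_eq_inner)
    have sq: "0 \<le> (u t x - u t y) \<bullet> (u t x - u t y)" by simp
    have "u t x \<bullet> u t y - E t x - E t y \<le> 0"
      using e[of x] e[of y] sq iep[of x] iep[of y]
      by (simp add: inner_diff_left inner_diff_right inner_commute algebra_simps)
    moreover have "0 \<le> \<Psi> x y * \<rho> t x * \<rho> t y" using nn pos by simp
    ultimately show "0 \<le> - (\<Psi> x y * \<rho> t x * \<rho> t y * (u t x \<bullet> u t y - E t x - E t y))"
      by (simp add: mult_nonneg_nonpos)
  qed
  then show ?thesis unfolding Q2_def by simp
qed

lemma energy_deriv:
  fixes \<Psi> :: "'a::euclidean_space \<Rightarrow> 'a \<Rightarrow> real" and vb :: 'a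
  assumes adm: "admissible \<Psi> a T \<rho> u E F1 F2" and aT: "a < T"
    and cP: "continuous_on UNIV (\<lambda>p. \<Psi> (fst p) (snd p))" and sym: "\<And>x y. \<Psi> x y = \<Psi> y x"
    and nn: "\<And>x y. 0 \<le> \<Psi> x y" and t: "t \<in> {a..T}"
  shows "\<exists>H'. (energy vb \<rho> u E has_vector_derivative H') (at t within {a..T})
     \<and> H' \<le> 2 * (\<integral>x. \<rho> t x * (F2 t x - vb \<bullet> F1 t x) \<partial>lborel)"
proof -
  note AD = adm[unfolded admissible_def]
  have C1r: "C1_on a T \<rho>" using AD by (rule conjunct1)
  have C1u: "C1_on a T u" using AD[THEN conjunct2] by (rule conjunct1)
  have C1E: "C1_on a T E" using AD[THEN conjunct2, THEN conjunct2] by (rule conjunct1)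
  have cF1: "continuous_on ({a..T} \<times> UNIV) (\<lambda>p. F1 (fst p) (snd p))"
    using AD[THEN conjunct2, THEN conjunct2, THEN conjunct2, THEN conjunct1] unfolding C0_on_def .
  have cF2: "continuous_on ({a..T} \<times> UNIV) (\<lambda>p. F2 (fst p) (snd p))"
    using AD[THEN conjunct2, THEN conjunct2, THEN conjunct2, THEN conjunct2, THEN conjunct1] unfolding C0_on_def .
  note pos0 = AD[THEN conjunct2, THEN conjunct2, THEN conjunct2, THEN conjunct2, THEN conjunct2, THEN conjunct1]
  have pos: "\<And>s y. s \<in> {a..T} \<Longrightarrow> 0 \<le> \<rho> s y" using pos0 by blast
  note iep0 = AD[THEN conjunct2, THEN conjunct2, THEN conjunct2, THEN conjunct2, THEN conjunct2, THEN conjunct2, THEN conjunct1]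
  have iep: "\<And>s y. s \<in> {a..T} \<Longrightarrow> 0 < ie u E s y" using iep0 by blast
  note K0 = AD[THEN conjunct2, THEN conjunct2, THEN conjunct2, THEN conjunct2, THEN conjunct2, THEN conjunct2, THEN conjunct2, THEN conjunct1]
  note pde0 = AD[THEN conjunct2, THEN conjunct2, THEN conjunct2, THEN conjunct2, THEN conjunct2, THEN conjunct2, THEN conjunct2, THEN conjunct2]
  note pde = pde0[rule_format]
  obtain K where K: "compact K" and Kc: "\<And>s. s \<in> {a..T} \<Longrightarrow> closure {x. \<rho> s x \<noteq> 0} \<subseteq> K"
    using K0 by blast
  have z: "\<rho> s y = 0" if zs: "s \<in> {a..T}" and zy: "y \<notin> K" for s y
  proof (rule ccontr)
    assume "\<rho> s y \<noteq> 0"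
    then have "y \<in> {x. \<rho> s x \<noteq> 0}" by simp
    then have "y \<in> closure {x. \<rho> s x \<noteq> 0}" by (rule closure_subset[THEN subsetD])
    then have "y \<in> K" using Kc[OF zs] by (rule subsetD[rotated])
    with zy show False by simp
  qed
  obtain cc where Kb: "K \<subseteq> cbox (-cc) cc"
    using bounded_subset_cbox_symmetric[OF compact_imp_bounded[OF K]] by blast

  define n where "n = (\<lambda>s y. \<rho> s y * E s y)"
  define m where "m = (\<lambda>s y. \<rho> s y *\<^sub>R u s y)"
  define fr where "fr = (\<lambda>(i::'a) s y. \<rho> s y * (u s y \<bullet> i))"
  define fm where "fm = (\<lambda>(i::'a) s y. (\<rho> s y * (u s y \<bullet> i)) *\<^sub>R u s y + prs \<rho> u E s y *\<^sub>R i)"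
  define fn where "fn = (\<lambda>(i::'a) s y. (\<rho> s y * E s y + prs \<rho> u E s y) * (u s y \<bullet> i))"

  have Sr: "Sm a T \<rho>" by (rule Sm_C1[OF C1r aT])
  have Su: "Sm a T u" by (rule Sm_C1[OF C1u aT])
  have SE: "Sm a T E" by (rule Sm_C1[OF C1E aT])
  have Sn: "Sm a T n" unfolding n_def by (rule Sm_bil[OF bounded_bilinear_mult Sr SE aT])
  have Sm': "Sm a T m" unfolding m_def by (rule Sm_bil[OF bounded_bilinear_scaleR Sr Su aT])
  have Sie: "Sm a T (ie u E)"
  proof -
    have "Sm a T (\<lambda>s y. E s y - (1/2::real) * (u s y \<bullet> u s y))"
      by (intro Sm_diff SE Sm_bil[OF bounded_bilinear_mult] Sm_const Sm_bil[OF bounded_bilinear_inner] Su aT)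
    moreover have "(\<lambda>s y. E s y - (1/2::real) * (u s y \<bullet> u s y)) = ie u E"
      by (simp add: fun_eq_iff ie_def power2_norm_eq_inner)
    ultimately show ?thesis by simp
  qed
  have Sp: "Sm a T (prs \<rho> u E)"
  proof -
    have "Sm a T (\<lambda>s y. (2 / real DIM('a)) * (\<rho> s y * ie u E s y))"
      by (intro Sm_bil[OF bounded_bilinear_mult] Sm_const Sr Sie aT)
    moreover have "(\<lambda>s y. (2 / real DIM('a)) * (\<rho> s y * ie u E s y)) = prs \<rho> u E"
      by (simp add: fun_eq_iff prs_def)
    ultimately show ?thesis by simp
  qed
  have Sui: "Sm a T (\<lambda>s y. u s y \<bullet> i)" for i :: 'a
    by (intro Sm_bil[OF bounded_bilinear_inner] Su Sm_const aT)
  have Sfr: "Sm a T (fr i)" for i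
    unfolding fr_def by (intro Sm_bil[OF bounded_bilinear_mult] Sr Sui aT)
  have Sfm: "Sm a T (fm i)" for i
    unfolding fm_def
    by (intro Sm_add Sm_bil[OF bounded_bilinear_scaleR] Sm_bil[OF bounded_bilinear_mult] Sr Sui Su Sp Sm_const aT)
  have Sfn: "Sm a T (fn i)" for i
    unfolding fn_def
    by (intro Sm_add Sm_bil[OF bounded_bilinear_mult] Sn[unfolded n_def] Sp Sui aT)

  have zn: "\<And>s y. s \<in> {a..T} \<Longrightarrow> y \<notin> K \<Longrightarrow> n s y = 0" by (simp add: n_def z)
  have zm: "\<And>s y. s \<in> {a..T} \<Longrightarrow> y \<notin> K \<Longrightarrow> m s y = 0" by (simp add: m_def z)
  have zfr: "\<And>s y. s \<in> {a..T} \<Longrightarrow> y \<notin> K \<Longrightarrow> fr i s y = 0" for i by (simp add: fr_def z)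
  have zfm: "\<And>s y. s \<in> {a..T} \<Longrightarrow> y \<notin> K \<Longrightarrow> fm i s y = 0" for i by (simp add: fm_def prs_def z)
  have zfn: "\<And>s y. s \<in> {a..T} \<Longrightarrow> y \<notin> K \<Longrightarrow> fn i s y = 0" for i by (simp add: fn_def prs_def z)
  note Pr = Sm_props[OF Sr aT K z t]
  note Pn = Sm_props[OF Sn aT K zn t]
  note Pm = Sm_props[OF Sm' aT K zm t]
  note Pfr = Sm_props[OF Sfr aT K zfr t]
  note Pfm = Sm_props[OF Sfm aT K zfm t]
  note Pfn = Sm_props[OF Sfn aT K zfn t]
  have cu: "continuous_on UNIV (u t)" by (rule cont_slice[OF smfD(3)[OF Su[unfolded Sm_def]] t])
  have cF1t: "continuous_on UNIV (F1 t)" by (rule cont_slice[OF cF1 t])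
  have cF2t: "continuous_on UNIV (F2 t)" by (rule cont_slice[OF cF2 t])

  have weq: "wf vb \<rho> u E = (\<lambda>s y. 2 * n s y - 2 * (vb \<bullet> m s y) + (vb \<bullet> vb) * \<rho> s y)"
    by (simp add: fun_eq_iff wf_def n_def m_def)
  have Sw: "smf a T (wf vb \<rho> u E)
     (\<lambda>s y. 2 * pdt a T n s y - 2 * (vb \<bullet> pdt a T m s y) + (vb \<bullet> vb) * pdt a T \<rho> s y)
     (\<lambda>s y v. 2 * pdx v (n s) y - 2 * (vb \<bullet> pdx v (m s) y) + (vb \<bullet> vb) * pdx v (\<rho> s) y)"
    unfolding weq using smf_comb[OF Sn[unfolded Sm_def] Sm'[unfolded Sm_def] Sr[unfolded Sm_def], where vb=vb]
    by simp

  define Fx where "Fx = (\<lambda>i y v. 2 * pdx v (fn i t) y - 2 * (vb \<bullet> pdx v (fm i t) y) + (vb \<bullet> vb) * pdx v (fr i t) y)"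
  have divF: "integral\<^sup>L lborel (\<lambda>y. Fx i y i) = 0" for i
  proof -
    obtain Ft where SF: "smf a T (\<lambda>s y. 2 * fn i s y - 2 * (vb \<bullet> fm i s y) + (vb \<bullet> vb) * fr i s y) Ft
       (\<lambda>s y v. 2 * pdx v (fn i s) y - 2 * (vb \<bullet> pdx v (fm i s) y) + (vb \<bullet> vb) * pdx v (fr i s) y)"
      using smf_comb[OF Sfn[of i, unfolded Sm_def] Sfm[of i, unfolded Sm_def] Sfr[of i, unfolded Sm_def], where vb=vb] by blast
    show ?thesis
    proof (rule div_zero[where g="\<lambda>y. 2 * fn i t y - 2 * (vb \<bullet> fm i t y) + (vb \<bullet> vb) * fr i t y" and g'="Fx i" and i=i, OF _ _ K])
      fix y show "((\<lambda>y. 2 * fn i t y - 2 * (vb \<bullet> fm i t y) + (vb \<bullet> vb) * fr i t y) has_derivative Fx i y) (at y)"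
        using smfD(2)[OF SF t, of y] by (simp add: Fx_def)
    next
      fix v show "continuous_on UNIV (\<lambda>y. Fx i y v)"
        using cont_slice[OF smfD(5)[OF SF, of v] t] by (simp add: Fx_def)
    next
      fix y assume "y \<notin> K"
      then show "2 * fn i t y - 2 * (vb \<bullet> fm i t y) + (vb \<bullet> vb) * fr i t y = 0"
        using zfn[OF t] zfm[OF t] zfr[OF t] by simp
    qed
  qed

  define q2 where "q2 = (\<lambda>x. pdt a T n t x + (\<Sum>i\<in>Basis. pdx i (fn i t) x) - \<rho> t x * F2 t x)"
  define q1 where "q1 = (\<lambda>x. vb \<bullet> (pdt a T m t x + (\<Sum>i\<in>Basis. pdx i (fm i t) x) - \<rho> t x *\<^sub>R F1 t x))"
  define P where "P = (\<lambda>x. \<rho> t x * (F2 t x - vb \<bullet> F1 t x))"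
  define D where "D = (\<lambda>x. 2 * pdt a T n t x - 2 * (vb \<bullet> pdt a T m t x) + (vb \<bullet> vb) * pdt a T \<rho> t x)"

  have P1: "pdt a T \<rho> t x = - (\<Sum>i\<in>Basis. pdx i (fr i t) x)" for x
  proof -
    have "pdt a T \<rho> t x + (\<Sum>i\<in>Basis. pdx i (fr i t) x) = 0"
      using pde[OF t, of x] by (simp add: fr_def)
    then show ?thesis by linarith
  qed
  have P2: "pdt a T m t x + (\<Sum>i\<in>Basis. pdx i (fm i t) x) = Q1 \<Psi> \<rho> u t x + \<rho> t x *\<^sub>R F1 t x" for x
    using pde[OF t, of x] by (simp add: m_def fm_def)
  have P3: "pdt a T n t x + (\<Sum>i\<in>Basis. pdx i (fn i t) x) = Q2 \<Psi> \<rho> u E t x + \<rho> t x * F2 t x" for x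
    using pde[OF t, of x] by (simp add: n_def fn_def)

  have Deq: "D x = 2 * q2 x - 2 * q1 x + 2 * P x - (\<Sum>i\<in>Basis. Fx i x i)" for x
  proof -
    have S: "(\<Sum>i\<in>Basis. Fx i x i) = 2 * (\<Sum>i\<in>Basis. pdx i (fn i t) x)
        - 2 * (vb \<bullet> (\<Sum>i\<in>Basis. pdx i (fm i t) x)) + (vb \<bullet> vb) * (\<Sum>i\<in>Basis. pdx i (fr i t) x)"
      by (simp add: Fx_def sum.distrib sum_subtractf sum_distrib_left inner_sum_right)
    show ?thesis
      unfolding S D_def q2_def q1_def P_def P1
      by (simp add: inner_diff_right inner_add_right algebra_simps)
  qed

  have q2le: "q2 x \<le> 0" for x
  proof -
    have "q2 x = Q2 \<Psi> \<rho> u E t x" using P3[of x] by (simp add: q2_def)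
    also have "\<dots> \<le> 0" by (rule Q2_nonpos) (auto intro: nn pos[OF t] iep[OF t])
    finally show ?thesis .
  qed

  have cPx: "continuous_on UNIV (\<Psi> x)" for x
  proof -
    have "continuous_on UNIV (\<lambda>y. (\<lambda>p. \<Psi> (fst p) (snd p)) (x, y))"
      by (rule continuous_on_compose2[OF cP]) (auto intro!: continuous_intros)
    then show ?thesis by simp
  qed
  have q1eq: "q1 x = (\<integral>y. \<Psi> x y * \<rho> t x * \<rho> t y * (vb \<bullet> (u t y - u t x)) \<partial>lborel)" for x
  proof -
    have "q1 x = vb \<bullet> Q1 \<Psi> \<rho> u t x" using P2[of x] by (simp add: q1_def)
    also have "\<dots> = (\<integral>y. vb \<bullet> ((\<Psi> x y * \<rho> t x * \<rho> t y) *\<^sub>R (u t y - u t x)) \<partial>lborel)"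
      unfolding Q1_def
    proof (rule integral_inner_right[symmetric])
      show "integrable lborel (\<lambda>y. (\<Psi> x y * \<rho> t x * \<rho> t y) *\<^sub>R (u t y - u t x))"
        by (rule intg_cs[OF _ K]) (auto simp: z[OF t] intro!: continuous_intros cPx Pr(1) cu)
    qed
    finally show ?thesis by simp
  qed
  have q1int: "integral\<^sup>L lborel q1 = 0"
    unfolding q1eq
    by (rule Q1_int_zero[OF cP Pr(1) cu K z[OF t] sym])

  have zpn: "pdt a T n t x = 0" if "x \<notin> K" for x using Sm_props(4)[OF Sn aT K zn t that] .
  have zpm: "pdt a T m t x = 0" if "x \<notin> K" for x using Sm_props(4)[OF Sm' aT K zm t that] .
  have zpr: "pdt a T \<rho> t x = 0" if "x \<notin> K" for x using Sm_props(4)[OF Sr aT K z t that] .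
  have zdfn: "(\<Sum>i\<in>Basis. pdx i (fn i t) x) = 0" if "x \<notin> K" for x
    by (rule sum.neutral) (use Sm_props(5)[OF Sfn aT K zfn t that] in blast)
  have zdfm: "(\<Sum>i\<in>Basis. pdx i (fm i t) x) = 0" if "x \<notin> K" for x
    by (rule sum.neutral) (use Sm_props(5)[OF Sfm aT K zfm t that] in blast)
  have zq2: "q2 x = 0" if "x \<notin> K" for x
    using zpn[OF that] zdfn[OF that] z[OF t that] by (simp add: q2_def)
  have zq1: "q1 x = 0" if "x \<notin> K" for x
    using zpm[OF that] zdfm[OF that] z[OF t that] by (simp add: q1_def)
  have zP: "P x = 0" if "x \<notin> K" for x
    using z[OF t that] by (simp add: P_def)
  have zF: "Fx i x i = 0" if "x \<notin> K" for i x
    using Sm_props(5)[OF Sfn aT K zfn t that] Sm_props(5)[OF Sfm aT K zfm t that]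
      Sm_props(5)[OF Sfr aT K zfr t that] by (simp add: Fx_def)
  have iq2: "integrable lborel q2"
    by (rule intg_cs[OF _ K zq2]) (unfold q2_def, intro continuous_intros Pn(2) Pfn(3) Pr(1) cF2t)
  have iq1: "integrable lborel q1"
    by (rule intg_cs[OF _ K zq1]) (unfold q1_def, intro continuous_intros Pm(2) Pfm(3) Pr(1) cF1t)
  have iP: "integrable lborel P"
    by (rule intg_cs[OF _ K zP]) (unfold P_def, intro continuous_intros Pr(1) cF1t cF2t)
  have iF: "integrable lborel (\<lambda>x. Fx i x i)" for i
    by (rule intg_cs[OF _ K zF]) (unfold Fx_def, intro continuous_intros Pfn(3) Pfm(3) Pfr(3))

  have "integral\<^sup>L lborel D = integral\<^sup>L lborel (\<lambda>x. 2 * q2 x - 2 * q1 x + 2 * P x - (\<Sum>i\<in>Basis. Fx i x i))"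
    by (rule arg_cong[where f="integral\<^sup>L lborel"]) (rule ext, rule Deq)
  also have "\<dots> = 2 * integral\<^sup>L lborel q2 - 2 * integral\<^sup>L lborel q1 + 2 * integral\<^sup>L lborel P
       - (\<Sum>i\<in>Basis. integral\<^sup>L lborel (\<lambda>x. Fx i x i))"
  proof -
    have i1: "integrable lborel (\<lambda>x. 2 * q2 x - 2 * q1 x + 2 * P x)"
      using iq1 iq2 iP by simp
    have i2: "integrable lborel (\<lambda>x. \<Sum>i\<in>Basis. Fx i x i)"
      using iF by simp
    have "integral\<^sup>L lborel (\<lambda>x. 2 * q2 x - 2 * q1 x + 2 * P x - (\<Sum>i\<in>Basis. Fx i x i))
        = integral\<^sup>L lborel (\<lambda>x. 2 * q2 x - 2 * q1 x + 2 * P x) - integral\<^sup>L lborel (\<lambda>x. \<Sum>i\<in>Basis. Fx i x i)"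
      by (rule Bochner_Integration.integral_diff[OF i1 i2])
    also have "integral\<^sup>L lborel (\<lambda>x. \<Sum>i\<in>Basis. Fx i x i) = (\<Sum>i\<in>Basis. integral\<^sup>L lborel (\<lambda>x. Fx i x i))"
      by (rule Bochner_Integration.integral_sum) (use iF in auto)
    also have "integral\<^sup>L lborel (\<lambda>x. 2 * q2 x - 2 * q1 x + 2 * P x)
        = 2 * integral\<^sup>L lborel q2 - 2 * integral\<^sup>L lborel q1 + 2 * integral\<^sup>L lborel P"
      using iq1 iq2 iP by simp
    finally show ?thesis .
  qed
  also have "\<dots> = 2 * integral\<^sup>L lborel q2 + 2 * integral\<^sup>L lborel P"
    using q1int divF by simp
  also have "\<dots> \<le> 2 * integral\<^sup>L lborel P"
  proof -
    have "0 \<le> (\<integral>x. - q2 x \<partial>lborel)"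
      by (rule integral_nonneg_AE) (use q2le in \<open>auto intro!: AE_I2\<close>)
    then show ?thesis by simp
  qed
  finally have Dle: "integral\<^sup>L lborel D \<le> 2 * (\<integral>x. \<rho> t x * (F2 t x - vb \<bullet> F1 t x) \<partial>lborel)"
    by (simp add: P_def)

  have zw: "\<And>s y. s \<in> {a..T} \<Longrightarrow> y \<notin> K \<Longrightarrow> wf vb \<rho> u E s y = 0" by (simp add: wf_def z)
  have eq1: "energy vb \<rho> u E s = integral (cbox (-cc) cc) (wf vb \<rho> u E s)" if s: "s \<in> {a..T}" for s
  proof -
    have "energy vb \<rho> u E s = integral\<^sup>L lborel (wf vb \<rho> u E s)"
      unfolding energy_def energy_integrand by simp
    also have "\<dots> = integral (cbox (-cc) cc) (wf vb \<rho> u E s)"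
      by (rule lint_box[OF cont_slice[OF smfD(3)[OF Sw] s] K _ Kb]) (use zw s in auto)
    finally show ?thesis .
  qed
  have Leib: "((\<lambda>s. integral (cbox (-cc) cc) (wf vb \<rho> u E s)) has_vector_derivative
      integral (cbox (-cc) cc) D) (at t within {a..T})"
    unfolding D_def
  proof (rule leibniz_rule_vector_derivative[where fx="\<lambda>s y. 2 * pdt a T n s y - 2 * (vb \<bullet> pdt a T m s y) + (vb \<bullet> vb) * pdt a T \<rho> s y"])
    fix s y assume "s \<in> {a..T}"
    then show "((\<lambda>s. wf vb \<rho> u E s y) has_vector_derivative 2 * pdt a T n s y - 2 * (vb \<bullet> pdt a T m s y) + (vb \<bullet> vb) * pdt a T \<rho> s y) (at s within {a..T})"
      by (rule smfD(1)[OF Sw])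
  next
    fix s assume s: "s \<in> {a..T}"
    show "wf vb \<rho> u E s integrable_on cbox (- cc) cc"
      by (rule integrable_continuous) (rule continuous_on_subset[OF cont_slice[OF smfD(3)[OF Sw] s]], simp)
  next
    show "continuous_on ({a..T} \<times> cbox (- cc) cc) (\<lambda>(s, y). 2 * pdt a T n s y - 2 * (vb \<bullet> pdt a T m s y) + (vb \<bullet> vb) * pdt a T \<rho> s y)"
      unfolding split_beta' by (rule continuous_on_subset[OF smfD(4)[OF Sw]]) auto
  next
    show "convex {a..T}" using convex_box(1)[of a T] by (simp add: cbox_interval)
  qed (use t in auto)
  have "(energy vb \<rho> u E has_vector_derivative integral (cbox (-cc) cc) D) (at t within {a..T})"
    by (rule has_vector_derivative_transform[OF t eq1 Leib])
  moreover have "integral (cbox (-cc) cc) D = integral\<^sup>L lborel D"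
    unfolding D_def
    by (rule lint_box[symmetric, OF _ K _ Kb]) (simp_all add: zpn zpm zpr, intro continuous_intros Pn(2) Pm(2) Pr(2))
  ultimately show ?thesis using Dle by auto
qed

definition Lc :: "real \<Rightarrow> 'a::euclidean_space \<Rightarrow> (real \<Rightarrow> 'a \<Rightarrow> real) \<Rightarrow> (real \<Rightarrow> 'a \<Rightarrow> 'a)
    \<Rightarrow> (real \<Rightarrow> 'a \<Rightarrow> real) \<Rightarrow> (real \<Rightarrow> 'a \<Rightarrow> 'a) \<Rightarrow> (real \<Rightarrow> 'a \<Rightarrow> real) \<Rightarrow> real \<Rightarrow> 'a \<Rightarrow> real" where
  "Lc lam vb \<rho> u E F1 F2 t x = \<rho> t x * (norm (u t x - vb))\<^sup>2 + 2 * \<rho> t x * ie u E t x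
      + lam * Gc \<rho> u E F1 F2 t x"

lemma cost_Lc: "cost lam vb a T \<rho> u E F1 F2 = (LINT t:{a..T}|lborel. (\<integral>x. Lc lam vb \<rho> u E F1 F2 t x \<partial>lborel))"
  unfolding cost_def Lc_def ..

lemma adm_facts:
  assumes adm: "admissible \<Psi> a T \<rho> u E F1 F2" and aT: "a < T"
  shows "\<exists>K. compact K \<and> (\<forall>t\<in>{a..T}. \<forall>x. x \<notin> K \<longrightarrow> \<rho> t x = 0)"
    "continuous_on ({a..T} \<times> UNIV) (\<lambda>p. \<rho> (fst p) (snd p))"
    "continuous_on ({a..T} \<times> UNIV) (\<lambda>p. u (fst p) (snd p))"
    "continuous_on ({a..T} \<times> UNIV) (\<lambda>p. E (fst p) (snd p))"
    "continuous_on ({a..T} \<times> UNIV) (\<lambda>p. F1 (fst p) (snd p))"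
    "continuous_on ({a..T} \<times> UNIV) (\<lambda>p. F2 (fst p) (snd p))"
    "\<And>t x. t \<in> {a..T} \<Longrightarrow> 0 \<le> \<rho> t x"
    "\<And>t x. t \<in> {a..T} \<Longrightarrow> 0 < ie u E t x"
proof -
  note AD = adm[unfolded admissible_def]
  note K0 = AD[THEN conjunct2, THEN conjunct2, THEN conjunct2, THEN conjunct2, THEN conjunct2, THEN conjunct2, THEN conjunct2, THEN conjunct1]
  obtain K where K: "compact K" and Kc: "\<And>s. s \<in> {a..T} \<Longrightarrow> closure {x. \<rho> s x \<noteq> 0} \<subseteq> K"
    using K0 by blast
  have z: "\<rho> s y = 0" if zs: "s \<in> {a..T}" and zy: "y \<notin> K" for s y
  proof (rule ccontr)
    assume "\<rho> s y \<noteq> 0"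
    then have "y \<in> {x. \<rho> s x \<noteq> 0}" by simp
    then have "y \<in> closure {x. \<rho> s x \<noteq> 0}" by (rule closure_subset[THEN subsetD])
    then have "y \<in> K" using Kc[OF zs] by (rule subsetD[rotated])
    with zy show False by simp
  qed
  then have "\<forall>t\<in>{a..T}. \<forall>x. x \<notin> K \<longrightarrow> \<rho> t x = 0" by blast
  with K show "\<exists>K. compact K \<and> (\<forall>t\<in>{a..T}. \<forall>x. x \<notin> K \<longrightarrow> \<rho> t x = 0)" by blast
  have C1r: "C1_on a T \<rho>" using AD by (rule conjunct1)
  have C1u: "C1_on a T u" using AD[THEN conjunct2] by (rule conjunct1)
  have C1E: "C1_on a T E" using AD[THEN conjunct2, THEN conjunct2] by (rule conjunct1)
  show "continuous_on ({a..T} \<times> UNIV) (\<lambda>p. \<rho> (fst p) (snd p))"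
    using smfD(3)[OF Sm_C1[OF C1r aT, unfolded Sm_def]] .
  show "continuous_on ({a..T} \<times> UNIV) (\<lambda>p. u (fst p) (snd p))"
    using smfD(3)[OF Sm_C1[OF C1u aT, unfolded Sm_def]] .
  show "continuous_on ({a..T} \<times> UNIV) (\<lambda>p. E (fst p) (snd p))"
    using smfD(3)[OF Sm_C1[OF C1E aT, unfolded Sm_def]] .
  show "continuous_on ({a..T} \<times> UNIV) (\<lambda>p. F1 (fst p) (snd p))"
    using AD[THEN conjunct2, THEN conjunct2, THEN conjunct2, THEN conjunct1] unfolding C0_on_def .
  show "continuous_on ({a..T} \<times> UNIV) (\<lambda>p. F2 (fst p) (snd p))"
    using AD[THEN conjunct2, THEN conjunct2, THEN conjunct2, THEN conjunct2, THEN conjunct1] unfolding C0_on_def .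
  note pos0 = AD[THEN conjunct2, THEN conjunct2, THEN conjunct2, THEN conjunct2, THEN conjunct2, THEN conjunct1]
  show "\<And>t x. t \<in> {a..T} \<Longrightarrow> 0 \<le> \<rho> t x" using pos0 by blast
  note iep0 = AD[THEN conjunct2, THEN conjunct2, THEN conjunct2, THEN conjunct2, THEN conjunct2, THEN conjunct2, THEN conjunct1]
  show "\<And>t x. t \<in> {a..T} \<Longrightarrow> 0 < ie u E t x" using iep0 by blast
qed

lemma Lc_cont:
  assumes adm: "admissible \<Psi> a T \<rho> u E F1 F2" and aT: "a < T"
  shows "continuous_on ({a..T} \<times> UNIV) (\<lambda>p. Lc lam vb \<rho> u E F1 F2 (fst p) (snd p))"
proof -
  note A = adm_facts[OF adm aT]
  have cie: "continuous_on ({a..T} \<times> UNIV) (\<lambda>p. ie u E (fst p) (snd p))"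
    unfolding ie_def by (intro continuous_intros A(3) A(4)) auto
  have nz: "\<forall>p\<in>{a..T} \<times> UNIV. 2 * ie u E (fst p) (snd p) \<noteq> 0"
  proof
    fix p :: "real \<times> 'a" assume "p \<in> {a..T} \<times> UNIV"
    then have "fst p \<in> {a..T}" by (simp add: mem_Times_iff)
    then have "0 < ie u E (fst p) (snd p)" by (rule A(8))
    then show "2 * ie u E (fst p) (snd p) \<noteq> 0" by simp
  qed
  have cG: "continuous_on ({a..T} \<times> UNIV) (\<lambda>p. Gc \<rho> u E F1 F2 (fst p) (snd p))"
    unfolding Gc_def
    by (intro continuous_intros continuous_on_divide A(2) A(3) A(5) A(6) cie nz)
  show ?thesis
    unfolding Lc_def by (intro continuous_intros A(2) A(3) cie cG)
qed

lemma Lc_zero: "\<rho> t x = 0 \<Longrightarrow> Lc lam vb \<rho> u E F1 F2 t x = 0"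
  by (simp add: Lc_def Gc_def)

lemma Lc_nonneg:
  assumes "0 \<le> \<rho> t x" "0 < ie u E t x" "0 \<le> lam"
  shows "0 \<le> Lc lam vb \<rho> u E F1 F2 t x"
  using assms unfolding Lc_def Gc_def by (intro add_nonneg_nonneg mult_nonneg_nonneg) auto

lemma cint_cont:
  assumes adm: "admissible \<Psi> a T \<rho> u E F1 F2" and aT: "a < T"
  shows "continuous_on {a..T} (\<lambda>t. \<integral>x. Lc lam vb \<rho> u E F1 F2 t x \<partial>lborel)"
proof -
  note A = adm_facts[OF adm aT]
  obtain K where K: "compact K" and z: "\<And>t x. t \<in> {a..T} \<Longrightarrow> x \<notin> K \<Longrightarrow> \<rho> t x = 0"
    using A(1) by blast
  obtain cc where Kb: "K \<subseteq> cbox (-cc) cc"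
    using bounded_subset_cbox_symmetric[OF compact_imp_bounded[OF K]] by blast
  note LC = Lc_cont[OF adm aT, of lam vb]
  have eq: "(\<integral>x. Lc lam vb \<rho> u E F1 F2 t x \<partial>lborel) = integral (cbox (-cc) cc) (Lc lam vb \<rho> u E F1 F2 t)"
    if t: "t \<in> {a..T}" for t
    by (rule lint_box[OF cont_slice[OF LC t] K _ Kb]) (simp add: Lc_zero z[OF t])
  have "continuous_on {a..T} (\<lambda>t. integral (cbox (-cc) cc) (Lc lam vb \<rho> u E F1 F2 t))"
  proof (rule integral_continuous_on_param)
    show "continuous_on ({a..T} \<times> cbox (- cc) cc) (\<lambda>(t, x). Lc lam vb \<rho> u E F1 F2 t x)"
      unfolding split_beta' by (rule continuous_on_subset[OF LC]) auto
  qed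
  then show ?thesis by (rule continuous_on_eq) (simp add: eq)
qed

lemma cost_int:
  fixes c :: "real \<Rightarrow> real"
  assumes "continuous_on {b..T} c"
  shows "(LINT t:{b..T}|lborel. c t) = integral {b..T} c"
proof -
  have "set_integrable lborel {b..T} c"
    unfolding set_integrable_def using borel_integrable_compact[OF compact_Icc assms] .
  then show ?thesis by (rule set_borel_integral_eq_integral(2))
qed

lemma energy_nonneg:
  assumes "\<And>x. 0 \<le> \<rho> t x" "\<And>x. 0 < ie u E t x"
  shows "0 \<le> energy vb \<rho> u E t"
  unfolding energy_def
proof (rule integral_nonneg_AE, rule AE_I2)
  fix x
  have "0 \<le> \<rho> t x" "0 \<le> ie u E t x" using assms(1)[of x] assms(2)[of x] by auto
  then show "0 \<le> \<rho> t x * (norm (u t x - vb))\<^sup>2 + 2 * \<rho> t x * ie u E t x" by simp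
qed

lemma fb_alg:
  fixes u vb F1 :: "'a::real_inner" and r e s F2 :: real
  assumes s: "s > 0" and e: "e > 0" and F1: "F1 = - (1 / s) *\<^sub>R (u - vb)"
    and F2: "F2 = - (1 / s) * (2 * e + u \<bullet> (u - vb))"
  shows "r * (F2 - vb \<bullet> F1) = - (1 / s) * (r * (norm (u - vb))\<^sup>2 + 2 * r * e)"
    "r * (norm (u - vb))\<^sup>2 + 2 * r * e + s\<^sup>2 * (r * (norm F1)\<^sup>2 + r / (2 * e) * (F2 - u \<bullet> F1)\<^sup>2)
      = 2 * (r * (norm (u - vb))\<^sup>2 + 2 * r * e)"
proof -
  have n: "(norm (u - vb))\<^sup>2 = (u - vb) \<bullet> (u - vb)" by (simp add: power2_norm_eq_inner)
  have i1: "vb \<bullet> F1 = - (1 / s) * (vb \<bullet> (u - vb))" by (simp add: F1)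
  have i2: "(u - vb) \<bullet> (u - vb) = u \<bullet> (u - vb) - vb \<bullet> (u - vb)" by (simp add: inner_diff_left)
  have "r * (F2 - vb \<bullet> F1) = r * (- (1 / s) * (2 * e + u \<bullet> (u - vb)) + (1 / s) * (vb \<bullet> (u - vb)))"
    by (simp add: F2 i1)
  also have "\<dots> = - (1 / s) * (r * ((u - vb) \<bullet> (u - vb)) + 2 * r * e)"
    unfolding i2 by (simp add: algebra_simps)
  finally show "r * (F2 - vb \<bullet> F1) = - (1 / s) * (r * (norm (u - vb))\<^sup>2 + 2 * r * e)"
    unfolding n .
  have n1: "(norm F1)\<^sup>2 = (norm (u - vb))\<^sup>2 / s\<^sup>2"
    unfolding F1 using s by (simp add: power_divide power_mult_distrib)
  have i3: "u \<bullet> F1 = - (1 / s) * (u \<bullet> (u - vb))" by (simp add: F1)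
  have d: "F2 - u \<bullet> F1 = - (2 * e / s)"
    unfolding i3 F2 using s by (simp add: field_simps)
  show "r * (norm (u - vb))\<^sup>2 + 2 * r * e + s\<^sup>2 * (r * (norm F1)\<^sup>2 + r / (2 * e) * (F2 - u \<bullet> F1)\<^sup>2)
      = 2 * (r * (norm (u - vb))\<^sup>2 + 2 * r * e)"
    unfolding n1 d using s e by (simp add: field_simps power2_eq_square)
qed

lemma ptw_alg:
  fixes u vb F1 :: "'a::real_inner" and r e s F2 :: real
  assumes s: "s > 0" and e: "e > 0" and r: "r \<ge> 0"
  shows "2 * (r * (F2 - vb \<bullet> F1)) \<le> (1 / s) * (r * (norm (u - vb))\<^sup>2 + 2 * r * e
     + s\<^sup>2 * (r * (norm F1)\<^sup>2 + r / (2 * e) * (F2 - u \<bullet> F1)\<^sup>2))"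
proof -
  define A where "A = F2 - u \<bullet> F1"
  define B where "B = (u - vb) \<bullet> F1"
  define N where "N = (norm (u - vb))\<^sup>2"
  define M where "M = (norm F1)\<^sup>2"
  have AB: "F2 - vb \<bullet> F1 = A + B" by (simp add: A_def B_def inner_diff_left)
  have sq1: "0 \<le> (norm ((u - vb) - s *\<^sub>R F1))\<^sup>2" by simp
  have ex1: "(norm ((u - vb) - s *\<^sub>R F1))\<^sup>2 = N - 2 * s * B + s\<^sup>2 * M"
    unfolding N_def M_def B_def power2_norm_eq_inner
    by (simp add: inner_diff_left inner_diff_right inner_commute power2_eq_square algebra_simps)
  have h1: "2 * s * B \<le> N + s\<^sup>2 * M" using sq1 ex1 by linarith
  have sq2: "0 \<le> (2 * e - s * A)\<^sup>2" by simp
  have ex2: "(2 * e - s * A)\<^sup>2 = 4 * e\<^sup>2 - 4 * s * e * A + s\<^sup>2 * A\<^sup>2"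
    by (simp add: power2_eq_square algebra_simps)
  have h2': "4 * s * e * A \<le> 4 * e\<^sup>2 + s\<^sup>2 * A\<^sup>2" using sq2 ex2 by linarith
  have h2: "2 * s * A \<le> 2 * e + s\<^sup>2 * A\<^sup>2 / (2 * e)"
  proof -
    have p: "(2 * s * A - 2 * e) * (2 * e) \<le> s\<^sup>2 * A\<^sup>2"
      using h2' by (simp add: algebra_simps power2_eq_square)
    have "2 * s * A - 2 * e \<le> s\<^sup>2 * A\<^sup>2 / (2 * e)"
      using p e by (simp add: pos_le_divide_eq)
    then show ?thesis by linarith
  qed
  have "2 * s * (r * (F2 - vb \<bullet> F1)) = r * (2 * s * A) + r * (2 * s * B)"
    unfolding AB by (simp add: algebra_simps)
  also have "\<dots> \<le> r * (2 * e + s\<^sup>2 * A\<^sup>2 / (2 * e)) + r * (N + s\<^sup>2 * M)"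
    by (intro add_mono mult_left_mono h1 h2 r)
  also have "\<dots> = r * N + 2 * r * e + s\<^sup>2 * (r * M + r / (2 * e) * A\<^sup>2)"
    by (simp add: algebra_simps)
  finally have "s * (2 * (r * (F2 - vb \<bullet> F1))) \<le> r * N + 2 * r * e + s\<^sup>2 * (r * M + r / (2 * e) * A\<^sup>2)"
    by (simp add: algebra_simps)
  then show ?thesis
    unfolding A_def[symmetric] N_def[symmetric] M_def[symmetric]
    using s by (simp add: pos_le_divide_eq mult.commute)
qed

lemma fb_cost:
  fixes \<Psi> :: "'a::euclidean_space \<Rightarrow> 'a \<Rightarrow> real" and vb :: 'a
  assumes adm: "admissible \<Psi> a T \<rho> u E F1 F2" and aT: "a < T" and lam: "lam > 0"
    and cP: "continuous_on UNIV (\<lambda>p. \<Psi> (fst p) (snd p))" and sym: "\<And>x y. \<Psi> x y = \<Psi> y x"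
    and nn: "\<And>x y. 0 \<le> \<Psi> x y"
    and F1f: "\<forall>t\<in>{a..T}. \<forall>x. F1 t x = - (1 / sqrt lam) *\<^sub>R (u t x - vb)"
    and F2f: "\<forall>t\<in>{a..T}. \<forall>x. F2 t x = - (1 / sqrt lam) * (2 * ie u E t x + u t x \<bullet> (u t x - vb))"
  shows "cost lam vb a T \<rho> u E F1 F2 \<le> sqrt lam * energy vb \<rho> u E a"
proof -
  define s where "s = sqrt lam"
  have s: "s > 0" using lam by (simp add: s_def)
  have lams: "lam = s\<^sup>2" using lam by (simp add: s_def)
  note A = adm_facts[OF adm aT]
  define H where "H = energy vb \<rho> u E"
  have Hnn: "0 \<le> H t" if "t \<in> {a..T}" for t
    unfolding H_def by (rule energy_nonneg) (use A(7,8) that in auto)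
  have pt: "\<rho> t x * (F2 t x - vb \<bullet> F1 t x) = - (1 / s) * (\<rho> t x * (norm (u t x - vb))\<^sup>2 + 2 * \<rho> t x * ie u E t x)"
    if t: "t \<in> {a..T}" for t x
    by (rule fb_alg(1)[OF s A(8)[OF t]]) (use F1f F2f t in \<open>auto simp: s_def\<close>)
  have ED: "\<exists>H'. (H has_vector_derivative H') (at t within {a..T}) \<and> H' \<le> - (2 / s) * H t"
    if t: "t \<in> {a..T}" for t
  proof -
    obtain H' where d: "(H has_vector_derivative H') (at t within {a..T})"
      and le: "H' \<le> 2 * (\<integral>x. \<rho> t x * (F2 t x - vb \<bullet> F1 t x) \<partial>lborel)"
      using energy_deriv[OF adm aT cP sym nn t, of vb] unfolding H_def by blast
    have "(\<integral>x. \<rho> t x * (F2 t x - vb \<bullet> F1 t x) \<partial>lborel)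
        = (\<integral>x. - (1 / s) * (\<rho> t x * (norm (u t x - vb))\<^sup>2 + 2 * \<rho> t x * ie u E t x) \<partial>lborel)"
      using pt[OF t] by simp
    also have "\<dots> = - (1 / s) * H t"
      unfolding H_def energy_def by (rule integral_mult_right_zero)
    finally show ?thesis using d le by (intro exI[of _ H']) simp
  qed
  from bchoice[OF ballI[OF ED]] obtain H' where H'0: "\<forall>t\<in>{a..T}. (H has_vector_derivative H' t) (at t within {a..T}) \<and> H' t \<le> - (2 / s) * H t" ..
  have H': "(H has_vector_derivative H' t) (at t within {a..T}) \<and> H' t \<le> - (2 / s) * H t" if "t \<in> {a..T}" for t
    using H'0 that by (rule bspec)
  have FTC: "(H' has_integral H T - H a) {a..T}"
  proof (rule fundamental_theorem_of_calculus[OF less_imp_le[OF aT]])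
    fix t assume "t \<in> {a..T}"
    then show "(H has_vector_derivative H' t) (at t within {a..T})" by (rule H'[THEN conjunct1])
  qed
  have Hc: "continuous_on {a..T} H"
    unfolding continuous_on_eq_continuous_within
  proof
    fix t assume "t \<in> {a..T}"
    then show "continuous (at t within {a..T}) H" by (rule has_vector_derivative_continuous[OF H'[THEN conjunct1]])
  qed
  have Hi: "H integrable_on {a..T}" by (rule integrable_continuous_interval[OF Hc])
  have ceq: "cost lam vb a T \<rho> u E F1 F2 = (LINT t:{a..T}|lborel. 2 * H t)"
    unfolding cost_Lc
  proof (rule set_lebesgue_integral_cong)
    show "{a..T} \<in> sets lborel" by simp
    show "\<forall>t. t \<in> {a..T} \<longrightarrow> (\<integral>x. Lc lam vb \<rho> u E F1 F2 t x \<partial>lborel) = 2 * H t"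
    proof (intro allI impI)
      fix t assume t: "t \<in> {a..T}"
      have "Lc lam vb \<rho> u E F1 F2 t x = 2 * (\<rho> t x * (norm (u t x - vb))\<^sup>2 + 2 * \<rho> t x * ie u E t x)" for x
        unfolding Lc_def Gc_def lams
        by (rule fb_alg(2)[OF s A(8)[OF t]]) (use F1f F2f t in \<open>auto simp: s_def\<close>)
      then have "(\<integral>x. Lc lam vb \<rho> u E F1 F2 t x \<partial>lborel)
          = (\<integral>x. 2 * (\<rho> t x * (norm (u t x - vb))\<^sup>2 + 2 * \<rho> t x * ie u E t x) \<partial>lborel)"
        by (intro Bochner_Integration.integral_cong) auto
      then show "(\<integral>x. Lc lam vb \<rho> u E F1 F2 t x \<partial>lborel) = 2 * H t"
        unfolding H_def energy_def by (simp only: integral_mult_right_zero)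
    qed
  qed
  also have "\<dots> = integral {a..T} (\<lambda>t. 2 * H t)"
    by (rule cost_int) (intro continuous_intros Hc)
  also have "\<dots> = 2 * integral {a..T} H"
    using has_integral_mult_right[OF integrable_integral[OF Hi], of 2] by (rule integral_unique)
  also have "\<dots> \<le> s * (H a - H T)"
  proof -
    have "(2 / s) * integral {a..T} H \<le> - (H T - H a)"
    proof (rule has_integral_le[OF has_integral_mult_right[OF integrable_integral[OF Hi]] has_integral_neg[OF FTC]])
      fix t assume "t \<in> {a..T}"
      then have "H' t \<le> - (2 / s) * H t" by (rule H'[THEN conjunct2])
      then show "2 / s * H t \<le> - H' t" by linarith
    qed
    then have "s * ((2 / s) * integral {a..T} H) \<le> s * (H a - H T)"
      using s by (intro mult_left_mono) auto
    moreover have "s * ((2 / s) * integral {a..T} H) = 2 * integral {a..T} H" using s by simp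
    ultimately show ?thesis by linarith
  qed
  also have "\<dots> \<le> s * H a"
    using Hnn[of T] aT s by (simp add: mult_left_mono)
  finally show ?thesis by (simp add: s_def H_def)
qed

lemma opt_ineq:
  fixes \<Psi> :: "'a::euclidean_space \<Rightarrow> 'a \<Rightarrow> real" and vb :: 'a
  assumes adm: "admissible \<Psi> 0 T \<rho> u E F1 F2" and T: "0 < T" and lam: "lam > 0"
    and cP: "continuous_on UNIV (\<lambda>p. \<Psi> (fst p) (snd p))" and sym: "\<And>x y. \<Psi> x y = \<Psi> y x"
    and nn: "\<And>x y. 0 \<le> \<Psi> x y"
    and t12: "0 \<le> t1" "t1 \<le> t2" "t2 \<le> T"
  shows "energy vb \<rho> u E t2 - energy vb \<rho> u E t1 \<le> (1 / sqrt lam) * cost lam vb t1 T \<rho> u E F1 F2"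
proof -
  define s where "s = sqrt lam"
  have s: "s > 0" using lam by (simp add: s_def)
  have lams: "lam = s\<^sup>2" using lam by (simp add: s_def)
  note A = adm_facts[OF adm T]
  obtain K where K: "compact K" and z: "\<And>t x. t \<in> {0..T} \<Longrightarrow> x \<notin> K \<Longrightarrow> \<rho> t x = 0"
    using A(1) by blast
  define H where "H = energy vb \<rho> u E"
  define c where "c = (\<lambda>t. \<integral>x. Lc lam vb \<rho> u E F1 F2 t x \<partial>lborel)"
  have cc: "continuous_on {0..T} c" unfolding c_def by (rule cint_cont[OF adm T])
  have cnn: "0 \<le> c t" if "t \<in> {0..T}" for t
    unfolding c_def
    by (rule integral_nonneg_AE, rule AE_I2, rule Lc_nonneg) (use A(7,8) that lam in auto)
  have ED: "\<exists>H'. (H has_vector_derivative H') (at t within {0..T}) \<and> H' \<le> (1 / s) * c t"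
    if t: "t \<in> {0..T}" for t
  proof -
    obtain H' where d: "(H has_vector_derivative H') (at t within {0..T})"
      and le: "H' \<le> 2 * (\<integral>x. \<rho> t x * (F2 t x - vb \<bullet> F1 t x) \<partial>lborel)"
      using energy_deriv[OF adm T cP sym nn t, of vb] unfolding H_def by blast
    have iL: "integrable lborel (\<lambda>x. (1 / s) * Lc lam vb \<rho> u E F1 F2 t x)"
      by (intro integrable_mult_right intg_cs[OF cont_slice[OF Lc_cont[OF adm T] t] K])
        (simp add: Lc_zero z[OF t])
    have "2 * (\<integral>x. \<rho> t x * (F2 t x - vb \<bullet> F1 t x) \<partial>lborel)
        = (\<integral>x. 2 * (\<rho> t x * (F2 t x - vb \<bullet> F1 t x)) \<partial>lborel)" by simp
    also have "\<dots> \<le> (\<integral>x. (1 / s) * Lc lam vb \<rho> u E F1 F2 t x \<partial>lborel)"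
    proof (rule integral_mono'[OF iL])
      fix x
      show "2 * (\<rho> t x * (F2 t x - vb \<bullet> F1 t x)) \<le> 1 / s * Lc lam vb \<rho> u E F1 F2 t x"
        unfolding Lc_def Gc_def lams by (rule ptw_alg[OF s A(8)[OF t] A(7)[OF t]])
      show "0 \<le> 1 / s * Lc lam vb \<rho> u E F1 F2 t x"
      proof -
        have "0 \<le> Lc lam vb \<rho> u E F1 F2 t x"
          by (rule Lc_nonneg) (use A(7)[OF t] A(8)[OF t] lam in auto)
        then show ?thesis using s by simp
      qed
    qed
    also have "\<dots> = (1 / s) * c t" unfolding c_def by simp
    finally show ?thesis using d le by (intro exI[of _ H']) simp
  qed
  from bchoice[OF ballI[OF ED]] obtain H' where H'0: "\<forall>t\<in>{0..T}. (H has_vector_derivative H' t) (at t within {0..T}) \<and> H' t \<le> (1 / s) * c t" ..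
  have H': "(H has_vector_derivative H' t) (at t within {0..T}) \<and> H' t \<le> (1 / s) * c t" if "t \<in> {0..T}" for t
    using H'0 that by (rule bspec)
  have sub: "{t1..t2} \<subseteq> {0..T}" using t12 by auto
  have FTC: "(H' has_integral H t2 - H t1) {t1..t2}"
  proof (rule fundamental_theorem_of_calculus[OF t12(2)])
    fix t assume "t \<in> {t1..t2}"
    then have "t \<in> {0..T}" using sub by blast
    then have "(H has_vector_derivative H' t) (at t within {0..T})" by (rule H'[THEN conjunct1])
    then show "(H has_vector_derivative H' t) (at t within {t1..t2})"
      by (rule has_vector_derivative_within_subset[OF _ sub])
  qed
  have c12: "continuous_on {t1..t2} c" by (rule continuous_on_subset[OF cc sub])
  have c1T: "continuous_on {t1..T} c" by (rule continuous_on_subset[OF cc]) (use t12 in auto)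
  have i12: "c integrable_on {t1..t2}" by (rule integrable_continuous_interval[OF c12])
  have i1T: "c integrable_on {t1..T}" by (rule integrable_continuous_interval[OF c1T])
  have "H t2 - H t1 \<le> (1 / s) * integral {t1..t2} c"
  proof (rule has_integral_le[OF FTC has_integral_mult_right[OF integrable_integral[OF i12]]])
    fix t assume "t \<in> {t1..t2}"
    then have "t \<in> {0..T}" using sub by blast
    then show "H' t \<le> 1 / s * c t" using H'[THEN conjunct2] by simp
  qed
  also have "\<dots> \<le> (1 / s) * integral {t1..T} c"
    using s by (intro mult_left_mono integral_subset_le i12 i1T) (use t12 cnn in auto)
  also have "integral {t1..T} c = cost lam vb t1 T \<rho> u E F1 F2"
    unfolding cost_Lc c_def[symmetric] by (rule cost_int[symmetric, OF c1T])
  finally show ?thesis by (simp add: H_def s_def)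
qed

theorem lemma4p4:
  fixes \<Psi> :: "'a::euclidean_space \<Rightarrow> 'a \<Rightarrow> real"
    and T lam :: real and vbar :: 'a
    and \<rho> :: "real \<Rightarrow> 'a \<Rightarrow> real" and u :: "real \<Rightarrow> 'a \<Rightarrow> 'a" and E :: "real \<Rightarrow> 'a \<Rightarrow> real"
    and F1 :: "real \<Rightarrow> 'a \<Rightarrow> 'a" and F2 :: "real \<Rightarrow> 'a \<Rightarrow> real"
  assumes T: "T > 0" and lam: "lam > 0"
    and Psi_lip: "\<exists>L. L-lipschitz_on UNIV (\<lambda>p. \<Psi> (fst p) (snd p))"
    and Psi_sym: "\<And>x y. \<Psi> x y = \<Psi> y x"
    and Psi_nonneg: "\<And>x y. 0 \<le> \<Psi> x y"
    and Psi_bdd: "bounded (range (\<lambda>p. \<Psi> (fst p) (snd p)))"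
    and opt: "optimal \<Psi> lam vbar T \<rho> u E F1 F2"
    and feedback: "\<forall>a\<in>{0..<T}. \<exists>\<rho>' u' E' F1' F2'.
        admissible \<Psi> a T \<rho>' u' E' F1' F2'
        \<and> (\<forall>x. \<rho>' a x = \<rho> a x \<and> u' a x = u a x \<and> E' a x = E a x)
        \<and> (\<forall>t\<in>{a..T}. \<forall>x. F1' t x = - (1 / sqrt lam) *\<^sub>R (u' t x - vbar))
        \<and> (\<forall>t\<in>{a..T}. \<forall>x. F2' t x = - (1 / sqrt lam) * (2 * ie u' E' t x + u' t x \<bullet> (u' t x - vbar)))"
  shows "\<forall>t1 t2. 0 \<le> t1 \<and> t1 \<le> t2 \<and> t2 \<le> T \<longrightarrow>
           energy vbar \<rho> u E t2
             \<le> (if lam \<le> 1 then 1 + 1 / sqrt lam else 1 + sqrt lam) * energy vbar \<rho> u E t1"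
proof (intro allI impI)
  fix t1 t2 assume h: "0 \<le> t1 \<and> t1 \<le> t2 \<and> t2 \<le> T"
  define C where "C = (if lam \<le> 1 then 1 + 1 / sqrt lam else 1 + sqrt lam)"
  have C2: "2 \<le> C"
  proof (cases "lam \<le> 1")
    case True
    then have "sqrt lam \<le> 1" by simp
    moreover have "0 < sqrt lam" using lam by simp
    ultimately have "1 \<le> 1 / sqrt lam" by (simp add: field_simps)
    then show ?thesis using True by (simp add: C_def)
  next
    case False
    then have "1 < sqrt lam" by simp
    then show ?thesis using False by (simp add: C_def)
  qed
  obtain L where "L-lipschitz_on UNIV (\<lambda>p. \<Psi> (fst p) (snd p))" using Psi_lip by blast
  then have cP: "continuous_on UNIV (\<lambda>p. \<Psi> (fst p) (snd p))" by (rule lipschitz_on_continuous_on)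
  have adm0: "admissible \<Psi> 0 T \<rho> u E F1 F2" using opt unfolding optimal_def by blast
  note A = adm_facts[OF adm0 T]
  have Hnn: "0 \<le> energy vbar \<rho> u E t" if "t \<in> {0..T}" for t
    by (rule energy_nonneg) (use A(7,8) that in auto)
  have H1: "0 \<le> energy vbar \<rho> u E t1" using Hnn h by auto
  have main: "energy vbar \<rho> u E t2 \<le> 2 * energy vbar \<rho> u E t1"
  proof (cases "t1 < T")
    case False
    then have "t1 = T" "t2 = T" using h by auto
    then show ?thesis using H1 by simp
  next
    case True
    then have a: "t1 \<in> {0..<T}" using h by auto
    obtain \<rho>' u' E' F1' F2' where adm': "admissible \<Psi> t1 T \<rho>' u' E' F1' F2'"
      and eq: "\<forall>x. \<rho>' t1 x = \<rho> t1 x \<and> u' t1 x = u t1 x \<and> E' t1 x = E t1 x"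
      and f1: "\<forall>t\<in>{t1..T}. \<forall>x. F1' t x = - (1 / sqrt lam) *\<^sub>R (u' t x - vbar)"
      and f2: "\<forall>t\<in>{t1..T}. \<forall>x. F2' t x = - (1 / sqrt lam) * (2 * ie u' E' t x + u' t x \<bullet> (u' t x - vbar))"
      using bspec[OF feedback a] by blast
    have cfb: "cost lam vbar t1 T \<rho>' u' E' F1' F2' \<le> sqrt lam * energy vbar \<rho>' u' E' t1"
      by (rule fb_cost[OF adm' True lam cP Psi_sym Psi_nonneg f1 f2])
    have eH: "energy vbar \<rho>' u' E' t1 = energy vbar \<rho> u E t1"
      using eq unfolding energy_def ie_def by simp
    have copt: "cost lam vbar t1 T \<rho> u E F1 F2 \<le> cost lam vbar t1 T \<rho>' u' E' F1' F2'"
      using opt a adm' eq unfolding optimal_def by blast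
    have oi: "energy vbar \<rho> u E t2 - energy vbar \<rho> u E t1 \<le> (1 / sqrt lam) * cost lam vbar t1 T \<rho> u E F1 F2"
      by (rule opt_ineq[OF adm0 T lam cP Psi_sym Psi_nonneg]) (use h in auto)
    have "(1 / sqrt lam) * cost lam vbar t1 T \<rho> u E F1 F2 \<le> (1 / sqrt lam) * (sqrt lam * energy vbar \<rho> u E t1)"
      using copt cfb eH lam by (intro mult_left_mono) auto
    also have "\<dots> = energy vbar \<rho> u E t1" using lam by simp
    finally show ?thesis using oi by linarith
  qed
  also have "\<dots> \<le> C * energy vbar \<rho> u E t1"
    using C2 H1 by (intro mult_right_mono) auto
  finally show "energy vbar \<rho> u E t2 \<le> (if lam \<le> 1 then 1 + 1 / sqrt lam else 1 + sqrt lam) * energy vbar \<rho> u E t1"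
    by (simp add: C_def)
qed

end
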